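(* For every graph $G$, $\operatorname{smw}(G)\le\operatorname{tw}(G)+1$, where $\operatorname{tw}$ denotes treewidth. Moreover, for every class of graphs of bounded sm-width, the clique-width is bounded on that class.
   Context: A split of $G$ is a partition $(V_1,V_2)$ of $V(G)$ with $|V_1|,|V_2|\ge2$ such that every vertex of $V_1$ with a neighbour in $V_2$ has the same neighbourhood in $V_2$. $\operatorname{mm}(A)$ is the maximum size of a matching among edges between $A$ and $V(G)\setminus A$; $\operatorname{sm}(A)=1$ if $(A,V(G)\setminus A)$ is a split, else $\operatorname{mm}(A)$. A branch decomposition of $G$: tree of max degree 3 with a bijection from leaves to $V(G)$; each tree edge $e$ induces the cut given by leaf-images of the two components of $T-e$. $\operatorname{smw}(G)$ is the minimum over branch decompositions of the maximum of $\operatorname{sm}$ over induced cuts. *)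

theory Defs
  imports Main
begin

definition graph :: "'a set \<Rightarrow> ('a \<Rightarrow> 'a \<Rightarrow> bool) \<Rightarrow> bool" where
  "graph V E \<longleftrightarrow> finite V \<and> (\<forall>x y. E x y \<longrightarrow> E y x) \<and> (\<forall>x. \<not> E x x)
     \<and> (\<forall>x y. E x y \<longrightarrow> x \<in> V \<and> y \<in> V)"

definition tree_conn :: "nat set set \<Rightarrow> nat set \<Rightarrow> bool" where
  "tree_conn TE S \<longleftrightarrow>
     (\<forall>x\<in>S. \<forall>y\<in>S. (x, y) \<in> {(u, w). {u, w} \<in> TE \<and> u \<in> S \<and> w \<in> S}\<^sup>*)"

definition is_tree :: "nat set \<Rightarrow> nat set set \<Rightarrow> bool" where
  "is_tree N TE \<longleftrightarrow> finite N
     \<and> (\<forall>e\<in>TE. \<exists>u v. u \<in> N \<and> v \<in> N \<and> u \<noteq> v \<and> e = {u, v})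
     \<and> tree_conn TE N
     \<and> (N = {} \<longrightarrow> TE = {})
     \<and> (N \<noteq> {} \<longrightarrow> card TE + 1 = card N)"

definition tdegree :: "nat set set \<Rightarrow> nat \<Rightarrow> nat" where
  "tdegree TE x = card {e \<in> TE. x \<in> e}"

definition tleaves :: "nat set \<Rightarrow> nat set set \<Rightarrow> nat set" where
  "tleaves N TE = {x \<in> N. tdegree TE x \<le> 1}"

text \<open>Nodes of the component of T - {a,b} containing a.\<close>
definition tcomp :: "nat set set \<Rightarrow> nat \<Rightarrow> nat \<Rightarrow> nat set" where
  "tcomp TE a b = {x. (a, x) \<in> {(u, w). {u, w} \<in> TE - {{a, b}}}\<^sup>*}"

definition is_split :: "'a set \<Rightarrow> ('a \<Rightarrow> 'a \<Rightarrow> bool) \<Rightarrow> 'a set \<Rightarrow> 'a set \<Rightarrow> bool" where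
  "is_split V E V1 V2 \<longleftrightarrow> V1 \<union> V2 = V \<and> V1 \<inter> V2 = {} \<and> card V1 \<ge> 2 \<and> card V2 \<ge> 2
     \<and> (\<forall>x\<in>V1. \<forall>y\<in>V1. (\<exists>z\<in>V2. E x z) \<longrightarrow> (\<exists>z\<in>V2. E y z) \<longrightarrow>
          {z \<in> V2. E x z} = {z \<in> V2. E y z})"

text \<open>Maximum size of a matching among edges between A and V - A
 (an edge is represented by the ordered pair (endpoint in A, endpoint outside A)).\<close>
definition mm :: "'a set \<Rightarrow> ('a \<Rightarrow> 'a \<Rightarrow> bool) \<Rightarrow> 'a set \<Rightarrow> nat" where
  "mm V E A = Max {card M | M. M \<subseteq> {(u, v). u \<in> A \<and> v \<in> V - A \<and> E u v}
                               \<and> inj_on fst M \<and> inj_on snd M}"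

definition sm :: "'a set \<Rightarrow> ('a \<Rightarrow> 'a \<Rightarrow> bool) \<Rightarrow> 'a set \<Rightarrow> nat" where
  "sm V E A = (if is_split V E A (V - A) then 1 else mm V E A)"

definition branch_decomp :: "'a set \<Rightarrow> nat set \<Rightarrow> nat set set \<Rightarrow> (nat \<Rightarrow> 'a) \<Rightarrow> bool" where
  "branch_decomp V N TE f \<longleftrightarrow> is_tree N TE \<and> (\<forall>x\<in>N. tdegree TE x \<le> 3)
     \<and> bij_betw f (tleaves N TE) V"

text \<open>Maximum of sm over the cuts induced by tree edges (0 if there are no tree edges).\<close>
definition bd_sm_width :: "'a set \<Rightarrow> ('a \<Rightarrow> 'a \<Rightarrow> bool) \<Rightarrow> nat set \<Rightarrow> nat set set \<Rightarrow> (nat \<Rightarrow> 'a) \<Rightarrow> nat" where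
  "bd_sm_width V E N TE f =
     Sup {sm V E (f ` (tleaves N TE \<inter> tcomp TE a b)) | a b. {a, b} \<in> TE}"

definition smw :: "'a set \<Rightarrow> ('a \<Rightarrow> 'a \<Rightarrow> bool) \<Rightarrow> nat" where
  "smw V E = (LEAST k. \<exists>N TE f. branch_decomp V N TE f \<and> bd_sm_width V E N TE f = k)"

definition tree_decomp :: "'a set \<Rightarrow> ('a \<Rightarrow> 'a \<Rightarrow> bool) \<Rightarrow> nat set \<Rightarrow> nat set set \<Rightarrow> (nat \<Rightarrow> 'a set) \<Rightarrow> bool" where
  "tree_decomp V E N TE B \<longleftrightarrow> is_tree N TE \<and> N \<noteq> {}
     \<and> (\<forall>x\<in>N. B x \<subseteq> V) \<and> (\<Union>x\<in>N. B x) = V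
     \<and> (\<forall>u v. E u v \<longrightarrow> (\<exists>x\<in>N. u \<in> B x \<and> v \<in> B x))
     \<and> (\<forall>v\<in>V. tree_conn TE {x \<in> N. v \<in> B x})"

definition treewidth :: "'a set \<Rightarrow> ('a \<Rightarrow> 'a \<Rightarrow> bool) \<Rightarrow> int" where
  "treewidth V E = int (LEAST k. \<exists>N TE B. tree_decomp V E N TE B \<and> Max (card ` B ` N) = k) - 1"

datatype 'a cwexp = CVert 'a nat | CUnion "'a cwexp" "'a cwexp"
  | CRelab nat nat "'a cwexp" | CJoin nat nat "'a cwexp"

fun cw_verts :: "'a cwexp \<Rightarrow> 'a set" where
  "cw_verts (CVert v i) = {v}"
| "cw_verts (CUnion e1 e2) = cw_verts e1 \<union> cw_verts e2"
| "cw_verts (CRelab i j e) = cw_verts e"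
| "cw_verts (CJoin i j e) = cw_verts e"

fun cw_lab :: "'a cwexp \<Rightarrow> 'a \<Rightarrow> nat" where
  "cw_lab (CVert v i) = (\<lambda>x. i)"
| "cw_lab (CUnion e1 e2) = (\<lambda>x. if x \<in> cw_verts e1 then cw_lab e1 x else cw_lab e2 x)"
| "cw_lab (CRelab i j e) = (\<lambda>x. if cw_lab e x = i then j else cw_lab e x)"
| "cw_lab (CJoin i j e) = cw_lab e"

fun cw_edges :: "'a cwexp \<Rightarrow> 'a \<Rightarrow> 'a \<Rightarrow> bool" where
  "cw_edges (CVert v i) = (\<lambda>x y. False)"
| "cw_edges (CUnion e1 e2) = (\<lambda>x y. cw_edges e1 x y \<or> cw_edges e2 x y)"
| "cw_edges (CRelab i j e) = cw_edges e"
| "cw_edges (CJoin i j e) = (\<lambda>x y. cw_edges e x y \<or>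
      (x \<in> cw_verts e \<and> y \<in> cw_verts e \<and>
       ((cw_lab e x = i \<and> cw_lab e y = j) \<or> (cw_lab e x = j \<and> cw_lab e y = i))))"

fun cw_ok :: "nat \<Rightarrow> 'a cwexp \<Rightarrow> bool" where
  "cw_ok k (CVert v i) \<longleftrightarrow> i < k"
| "cw_ok k (CUnion e1 e2) \<longleftrightarrow> cw_ok k e1 \<and> cw_ok k e2 \<and> cw_verts e1 \<inter> cw_verts e2 = {}"
| "cw_ok k (CRelab i j e) \<longleftrightarrow> i < k \<and> j < k \<and> cw_ok k e"
| "cw_ok k (CJoin i j e) \<longleftrightarrow> i < k \<and> j < k \<and> i \<noteq> j \<and> cw_ok k e"

definition cliquewidth :: "'a set \<Rightarrow> ('a \<Rightarrow> 'a \<Rightarrow> bool) \<Rightarrow> nat" where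
  "cliquewidth V E = (if V = {} then 0 else
     (LEAST k. \<exists>e. cw_ok k e \<and> cw_verts e = V \<and> cw_edges e = E))"

end

theory Submission
  imports Defs
begin


definition erel :: "nat set set \<Rightarrow> (nat \<times> nat) set" where
  "erel F = {(u,w). {u,w} \<in> F}"

lemma erel_iff[simp]: "(u,w) \<in> erel F \<longleftrightarrow> {u,w} \<in> F"
  by (simp add: erel_def)

lemma erel_mono: "F \<subseteq> G \<Longrightarrow> erel F \<subseteq> erel G"
  by (auto simp: erel_def)

lemma sym_erel: "sym (erel F)"
  by (auto simp: sym_def erel_def insert_commute)

lemma rtr_sym: "(x,y) \<in> (erel F)\<^sup>* \<Longrightarrow> (y,x) \<in> (erel F)\<^sup>*"
  using sym_rtrancl[OF sym_erel] by (auto simp: sym_def)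

lemma tcomp_erel: "tcomp TE a b = {x. (a,x) \<in> (erel (TE - {{a,b}}))\<^sup>*}"
  by (simp add: tcomp_def erel_def)

lemma tree_conn_erel: "tree_conn TE S \<longleftrightarrow> (\<forall>x\<in>S. \<forall>y\<in>S. (x,y) \<in> (erel TE \<inter> S \<times> S)\<^sup>*)"
proof -
  have "{(u, w). {u, w} \<in> TE \<and> u \<in> S \<and> w \<in> S} = erel TE \<inter> S \<times> S" by (auto simp: erel_def)
  thus ?thesis by (simp add: tree_conn_def)
qed

definition edges_ok :: "nat set \<Rightarrow> nat set set \<Rightarrow> bool" where
  "edges_ok N TE \<longleftrightarrow> (\<forall>e\<in>TE. \<exists>u v. u \<in> N \<and> v \<in> N \<and> u \<noteq> v \<and> e = {u, v})"

lemma is_tree_D: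
  assumes "is_tree N TE"
  shows "finite N" "edges_ok N TE" "tree_conn TE N" "N \<noteq> {} \<Longrightarrow> card TE + 1 = card N"
  using assms by (auto simp: is_tree_def edges_ok_def)

lemma edges_ok_edge: "edges_ok N TE \<Longrightarrow> {u,w} \<in> TE \<Longrightarrow> u \<in> N \<and> w \<in> N \<and> u \<noteq> w"
  unfolding edges_ok_def by (metis doubleton_eq_iff)

lemma edges_ok_sub: "edges_ok N TE \<Longrightarrow> e \<in> TE \<Longrightarrow> e \<subseteq> N"
  unfolding edges_ok_def by fastforce

lemma edges_ok_finite: "finite N \<Longrightarrow> edges_ok N TE \<Longrightarrow> finite TE"
  by (metis Pow_iff edges_ok_sub finite_Pow_iff rev_finite_subset subsetI)

lemma erel_in_N: "edges_ok N TE \<Longrightarrow> F \<subseteq> TE \<Longrightarrow> erel F \<subseteq> N \<times> N"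
  using edges_ok_edge by (auto simp: erel_def)

lemma reach_in_N:
  assumes "edges_ok N TE" "F \<subseteq> TE" "(a,x) \<in> (erel F)\<^sup>*" "a \<in> N"
  shows "x \<in> N"
  using assms(3,4)
proof (induction rule: rtrancl_induct)
  case (step y z) thus ?case using erel_in_N[OF assms(1,2)] by blast
qed auto

lemma tcomp_sub_N:
  assumes "is_tree N TE" "a \<in> N" shows "tcomp TE a b \<subseteq> N"
  using reach_in_N[OF is_tree_D(2)[OF assms(1)], of "TE - {{a,b}}" a] assms(2)
  by (auto simp: tcomp_erel)

lemma exists_leaving_edge:
  assumes "(r,y) \<in> R\<^sup>*" "r \<in> S" "y \<notin> S"
  shows "\<exists>u z. (u,z) \<in> R \<and> u \<in> S \<and> z \<notin> S"
proof (rule ccontr)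
  assume "\<not> ?thesis"
  hence "\<forall>u z. (u,z) \<in> R \<longrightarrow> u \<in> S \<longrightarrow> z \<in> S" by blast
  have "y \<in> S" using assms(1,2)
    by (induction rule: rtrancl_induct) (use \<open>\<forall>u z. _\<close> in blast)+
  thus False using assms(3) by simp
qed

lemma conn_card:
  assumes fin: "finite N" and ok: "edges_ok N TE" and conn: "tree_conn TE N" and r: "r \<in> N"
  shows "card N \<le> card TE + 1"
proof -
  have finTE: "finite TE" using edges_ok_finite[OF fin ok] .
  have main: "k < card N \<Longrightarrow> \<exists>S \<subseteq> N. r \<in> S \<and> card S = Suc k \<and> k \<le> card {e\<in>TE. e \<subseteq> S}" for k
  proof (induction k)
    case 0
    show ?case by (rule exI[of _ "{r}"]) (use r in auto)
  next
    case (Suc k)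
    then obtain S where S: "S \<subseteq> N" "r \<in> S" "card S = Suc k" "k \<le> card {e\<in>TE. e \<subseteq> S}" by auto
    have "S \<noteq> N" using S(3) Suc.prems by auto
    then obtain y where y: "y \<in> N" "y \<notin> S" using S(1) by auto
    have "(r,y) \<in> (erel TE \<inter> N \<times> N)\<^sup>*" using conn r y(1) by (simp add: tree_conn_erel)
    then obtain u z where uz: "(u,z) \<in> erel TE \<inter> N \<times> N" "u \<in> S" "z \<notin> S"
      using exists_leaving_edge[of r y _ S] S(2) y(2) by blast
    have finS: "finite S" using S(1) fin finite_subset by blast
    let ?S = "insert z S"
    have "insert {u,z} {e\<in>TE. e \<subseteq> S} \<subseteq> {e\<in>TE. e \<subseteq> ?S}" using uz by auto
    moreover have "{u,z} \<notin> {e\<in>TE. e \<subseteq> S}" using uz by auto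
    moreover have "finite {e\<in>TE. e \<subseteq> ?S}" using finTE by auto
    ultimately have "card (insert {u,z} {e\<in>TE. e \<subseteq> S}) \<le> card {e\<in>TE. e \<subseteq> ?S}"
      "card (insert {u,z} {e\<in>TE. e \<subseteq> S}) = Suc (card {e\<in>TE. e \<subseteq> S})"
      by (simp_all only: card_mono) (simp add: finTE)
    hence "Suc k \<le> card {e\<in>TE. e \<subseteq> ?S}" using S(4) by linarith
    thus ?case using S uz finS by (intro exI[of _ ?S]) auto
  qed
  have "card N > 0" using r fin by (auto simp: card_gt_0_iff)
  then obtain S where S: "S \<subseteq> N" "card S = card N" "card N - 1 \<le> card {e\<in>TE. e \<subseteq> S}"
    using main[of "card N - 1"] by auto
  have "S = N" using S fin card_subset_eq by blast
  have "{e\<in>TE. e \<subseteq> S} = TE" using edges_ok_sub[OF ok] \<open>S = N\<close> by auto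
  thus ?thesis using S(3) by simp
qed

lemma tree_L:
  assumes T: "is_tree N TE" and e: "{a,b} \<in> TE"
  shows "(a,b) \<notin> (erel (TE - {{a,b}}))\<^sup>*"
proof
  assume ab: "(a,b) \<in> (erel (TE - {{a,b}}))\<^sup>*"
  let ?F = "TE - {{a,b}}"
  have ok: "edges_ok N TE" and fin: "finite N" using is_tree_D[OF T] by auto
  have okF: "edges_ok N ?F" using ok by (auto simp: edges_ok_def)
  have aN: "a \<in> N" using edges_ok_edge[OF ok e] by auto
  have ba: "(b,a) \<in> (erel ?F)\<^sup>*" using rtr_sym[OF ab] .
  have EN: "erel ?F \<inter> N \<times> N = erel ?F" using erel_in_N[OF ok, of ?F] by auto
  have sub: "erel TE \<inter> N \<times> N \<subseteq> (erel ?F)\<^sup>*"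
  proof
    fix p assume p: "p \<in> erel TE \<inter> N \<times> N"
    obtain u w where [simp]: "p = (u,w)" by (cases p)
    show "p \<in> (erel ?F)\<^sup>*"
    proof (cases "{u,w} = {a,b}")
      case True
      hence "(u,w) = (a,b) \<or> (u,w) = (b,a)" by (simp add: doubleton_eq_iff)
      thus ?thesis using ab ba by auto
    next
      case False hence "(u,w) \<in> erel ?F" using p by simp
      thus ?thesis by (simp add: r_into_rtrancl)
    qed
  qed
  have "tree_conn ?F N"
    unfolding tree_conn_erel EN
  proof (intro ballI)
    fix x y assume "x \<in> N" "y \<in> N"
    hence "(x,y) \<in> (erel TE \<inter> N \<times> N)\<^sup>*" using is_tree_D(3)[OF T] by (simp add: tree_conn_erel)
    thus "(x,y) \<in> (erel ?F)\<^sup>*" using rtrancl_subset_rtrancl[OF sub] by auto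
  qed
  from conn_card[OF fin okF this aN] have "card N \<le> card ?F + 1" .
  moreover have "card ?F = card TE - 1" using e edges_ok_finite[OF fin ok] by simp
  moreover have "card TE + 1 = card N" using is_tree_D(4)[OF T] aN by auto
  moreover have "card TE > 0" using e edges_ok_finite[OF fin ok] card_gt_0_iff by blast
  ultimately show False by linarith
qed

lemma tree_L':
  assumes T: "is_tree N TE" and e: "{a,b} \<in> TE"
  shows "b \<notin> tcomp TE a b"
  using tree_L[OF T e] by (simp add: tcomp_erel)

lemma tcomp_self: "a \<in> tcomp TE a b" by (simp add: tcomp_erel)

lemma tcomp_sym_edge: "tcomp TE a b = {x. (a,x) \<in> (erel (TE - {{b,a}}))\<^sup>*}"
  by (simp add: tcomp_erel insert_commute)

lemma T1:
  assumes T: "is_tree N TE" and e: "{a,b} \<in> TE"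
  shows "tcomp TE a b \<inter> tcomp TE b a = {}" "tcomp TE a b \<union> tcomp TE b a = N"
proof -
  let ?R = "erel (TE - {{a,b}})"
  have ok: "edges_ok N TE" using is_tree_D[OF T] by auto
  have ab: "a \<in> N" "b \<in> N" "a \<noteq> b" using edges_ok_edge[OF ok e] by auto
  have ba: "tcomp TE b a = {x. (b,x) \<in> ?R\<^sup>*}" by (simp add: tcomp_erel insert_commute)
  show "tcomp TE a b \<inter> tcomp TE b a = {}"
  proof (rule ccontr)
    assume "tcomp TE a b \<inter> tcomp TE b a \<noteq> {}"
    then obtain x where "(a,x) \<in> ?R\<^sup>*" "(b,x) \<in> ?R\<^sup>*" using ba by (auto simp: tcomp_erel)
    hence "(a,b) \<in> ?R\<^sup>*" using rtr_sym by (meson rtrancl_trans)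
    thus False using tree_L[OF T e] by simp
  qed
  show "tcomp TE a b \<union> tcomp TE b a = N"
  proof
    show "tcomp TE a b \<union> tcomp TE b a \<subseteq> N"
      using tcomp_sub_N[OF T ab(1)] tcomp_sub_N[OF T ab(2)] by auto
    show "N \<subseteq> tcomp TE a b \<union> tcomp TE b a"
    proof
      fix x assume x: "x \<in> N"
      have "(a,x) \<in> (erel TE \<inter> N \<times> N)\<^sup>*" using is_tree_D(3)[OF T] ab(1) x by (simp add: tree_conn_erel)
      thus "x \<in> tcomp TE a b \<union> tcomp TE b a"
      proof (induction rule: rtrancl_induct)
        case base thus ?case by (simp add: tcomp_self)
      next
        case (step y z)
        show ?case
        proof (cases "{y,z} = {a,b}")
          case True
          hence "z = a \<or> z = b" by (auto simp: doubleton_eq_iff)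
          thus ?thesis by (auto simp: tcomp_self)
        next
          case False
          hence yz: "(y,z) \<in> ?R" using step(2) by simp
          from step(3) show ?thesis
          proof
            assume "y \<in> tcomp TE a b"
            hence "(a,y) \<in> ?R\<^sup>*" by (simp add: tcomp_erel)
            hence "(a,z) \<in> ?R\<^sup>*" using yz by (rule rtrancl_into_rtrancl)
            thus ?thesis by (simp add: tcomp_erel)
          next
            assume "y \<in> tcomp TE b a" 
            hence "(b,y) \<in> ?R\<^sup>*" using ba by simp
            hence "(b,z) \<in> ?R\<^sup>*" using yz by (rule rtrancl_into_rtrancl)
            thus ?thesis using ba by simp
          qed
        qed
      qed
    qed
  qed
qed

definition nb :: "nat set set \<Rightarrow> nat \<Rightarrow> nat set" where
  "nb TE a = {c. {a,c} \<in> TE}"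

lemma nb_not_self: "edges_ok N TE \<Longrightarrow> a \<notin> nb TE a"
  using edges_ok_edge[of N TE a a] by (auto simp: nb_def)

lemma tdegree_nb:
  assumes ok: "edges_ok N TE" and fin: "finite N"
  shows "tdegree TE a = card (nb TE a)"
proof -
  have "(\<lambda>c. {a,c}) ` nb TE a = {e \<in> TE. a \<in> e}"
  proof
    show "(\<lambda>c. {a,c}) ` nb TE a \<subseteq> {e \<in> TE. a \<in> e}" by (auto simp: nb_def)
    show "{e \<in> TE. a \<in> e} \<subseteq> (\<lambda>c. {a,c}) ` nb TE a"
    proof
      fix e assume e: "e \<in> {e \<in> TE. a \<in> e}"
      then obtain u v where uv: "e = {u,v}" using ok unfolding edges_ok_def by blast
      show "e \<in> (\<lambda>c. {a,c}) ` nb TE a"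
      proof (cases "a = u")
        case True thus ?thesis using e uv by (auto simp: nb_def image_iff)
      next
        case False hence "a = v" using e uv by auto
        thus ?thesis using e uv by (auto simp: nb_def image_iff insert_commute)
      qed
    qed
  qed
  moreover have "inj_on (\<lambda>c. {a,c}) (nb TE a)"
    by (auto simp: inj_on_def doubleton_eq_iff)
  ultimately show ?thesis unfolding tdegree_def by (metis card_image)
qed

lemma finite_nb: "edges_ok N TE \<Longrightarrow> finite N \<Longrightarrow> finite (nb TE a)"
proof -
  assume "edges_ok N TE" "finite N"
  hence "nb TE a \<subseteq> N" using edges_ok_edge by (auto simp: nb_def)
  thus ?thesis using \<open>finite N\<close> finite_subset by blast
qed

lemma AV:
  assumes T: "is_tree N TE" and c: "c \<in> nb TE a" and x: "x \<in> tcomp TE c a"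
  shows "(c,x) \<in> (erel {e\<in>TE. a \<notin> e})\<^sup>*"
proof -
  have e: "{c,a} \<in> TE" using c by (simp add: nb_def insert_commute)
  have na: "a \<notin> tcomp TE c a" using tree_L'[OF T e] .
  have "(c,x) \<in> (erel (TE - {{c,a}}))\<^sup>*" using x by (simp add: tcomp_erel)
  thus ?thesis
  proof (induction rule: rtrancl_induct)
    case (step y z)
    have "(c,z) \<in> (erel (TE - {{c,a}}))\<^sup>*" using step(1,2) by (rule rtrancl_into_rtrancl)
    hence "y \<in> tcomp TE c a" "z \<in> tcomp TE c a" using step(1) by (simp_all add: tcomp_erel)
    hence "y \<noteq> a" "z \<noteq> a" using na by auto
    hence "(y,z) \<in> erel {e\<in>TE. a \<notin> e}" using step(2) by simp
    thus ?case using step(3) by (rule rtrancl_into_rtrancl[rotated])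
  qed simp
qed

lemma reach_mono: "(x,y) \<in> (erel F)\<^sup>* \<Longrightarrow> F \<subseteq> G \<Longrightarrow> (x,y) \<in> (erel G)\<^sup>*"
  using rtrancl_mono[OF erel_mono] by blast

lemma T2_disj:
  assumes T: "is_tree N TE" and c: "c \<in> nb TE a" and c': "c' \<in> nb TE a" and ne: "c \<noteq> c'"
  shows "tcomp TE c a \<inter> tcomp TE c' a = {}"
proof (rule ccontr)
  assume "tcomp TE c a \<inter> tcomp TE c' a \<noteq> {}"
  then obtain x where x: "x \<in> tcomp TE c a" "x \<in> tcomp TE c' a" by auto
  let ?Q = "erel {e\<in>TE. a \<notin> e}"
  let ?R = "erel (TE - {{c',a}})"
  have "(c,x) \<in> ?Q\<^sup>*" "(c',x) \<in> ?Q\<^sup>*" using AV[OF T c x(1)] AV[OF T c' x(2)] by auto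
  hence "(c',c) \<in> ?Q\<^sup>*" using rtr_sym by (meson rtrancl_trans)
  hence 1: "(c',c) \<in> ?R\<^sup>*" by (rule reach_mono) auto
  have "{a,c} \<noteq> {c',a}" using ne by (auto simp: doubleton_eq_iff)
  hence "(a,c) \<in> ?R" using c by (simp add: nb_def)
  hence "(c,a) \<in> ?R\<^sup>*" using rtr_sym r_into_rtrancl by metis
  hence "(c',a) \<in> ?R\<^sup>*" using 1 by (rule rtrancl_trans[rotated])
  moreover have "{c',a} \<in> TE" using c' by (simp add: nb_def insert_commute)
  ultimately show False using tree_L[OF T] by blast
qed

lemma T2:
  assumes T: "is_tree N TE" and e: "{a,b} \<in> TE"
  shows "tcomp TE a b = insert a (\<Union>c\<in>nb TE a - {b}. tcomp TE c a)"
proof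
  let ?R = "erel (TE - {{a,b}})"
  show "insert a (\<Union>c\<in>nb TE a - {b}. tcomp TE c a) \<subseteq> tcomp TE a b"
  proof -
    have "x \<in> tcomp TE a b" if c: "c \<in> nb TE a" "c \<noteq> b" and x: "x \<in> tcomp TE c a" for c x
    proof -
      have "(c,x) \<in> ?R\<^sup>*" using AV[OF T c(1) x] by (rule reach_mono) auto
      moreover have "(a,c) \<in> ?R" using c by (auto simp: nb_def doubleton_eq_iff)
      ultimately have "(a,x) \<in> ?R\<^sup>*" by (rule converse_rtrancl_into_rtrancl[rotated])
      thus ?thesis by (simp add: tcomp_erel)
    qed
    thus ?thesis using tcomp_self[of a TE b] by blast
  qed
  show "tcomp TE a b \<subseteq> insert a (\<Union>c\<in>nb TE a - {b}. tcomp TE c a)"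
  proof
    fix x assume "x \<in> tcomp TE a b"
    hence "(a,x) \<in> ?R\<^sup>*" by (simp add: tcomp_erel)
    thus "x \<in> insert a (\<Union>c\<in>nb TE a - {b}. tcomp TE c a)"
    proof (induction rule: rtrancl_induct)
      case base thus ?case by simp
    next
      case (step y z)
      have yz: "{y,z} \<in> TE" "{y,z} \<noteq> {a,b}" using step(2) by auto
      show ?case
      proof (cases "y = a")
        case True
        hence "z \<in> nb TE a" "z \<noteq> b" using yz by (auto simp: nb_def)
        thus ?thesis using tcomp_self by blast
      next
        case False
        then obtain c where c: "c \<in> nb TE a" "c \<noteq> b" "y \<in> tcomp TE c a" using step(3) by auto
        show ?thesis
        proof (cases "{y,z} = {c,a}")
          case True thus ?thesis using False by (auto simp: doubleton_eq_iff)
        next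
          case False
          hence "(y,z) \<in> erel (TE - {{c,a}})" using yz(1) by simp
          moreover have "(c,y) \<in> (erel (TE - {{c,a}}))\<^sup>*" using c(3) by (simp add: tcomp_erel)
          ultimately have "(c,z) \<in> (erel (TE - {{c,a}}))\<^sup>*" by (rule rtrancl_into_rtrancl[rotated])
          hence "z \<in> tcomp TE c a" by (simp add: tcomp_erel)
          thus ?thesis using c by blast
        qed
      qed
    qed
  qed
qed

lemma T2_notin:
  assumes T: "is_tree N TE" and c: "c \<in> nb TE a"
  shows "a \<notin> tcomp TE c a"
  using tree_L'[OF T] c by (simp add: nb_def insert_commute)

lemma T2_card:
  assumes T: "is_tree N TE" and e: "{a,b} \<in> TE" and c: "c \<in> nb TE a" "c \<noteq> b"
  shows "card (tcomp TE c a) < card (tcomp TE a b)"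
proof -
  have ok: "edges_ok N TE" using is_tree_D[OF T] by auto
  have aN: "a \<in> N" using edges_ok_edge[OF ok e] by auto
  have fin: "finite (tcomp TE a b)" using tcomp_sub_N[OF T aN] is_tree_D(1)[OF T] finite_subset by blast
  have "tcomp TE c a \<subset> tcomp TE a b" using T2[OF T e] c T2_notin[OF T c(1)] tcomp_self[of a TE b] by blast
  thus ?thesis using fin psubset_card_mono by blast
qed

lemma root_decomp:
  assumes T: "is_tree N TE" and r: "r \<in> N"
  shows "N = insert r (\<Union>c\<in>nb TE r. tcomp TE c r)"
proof (cases "nb TE r = {}")
  case True
  have "x = r" if x: "x \<in> N" for x
  proof -
    have "(r,x) \<in> (erel TE \<inter> N \<times> N)\<^sup>*" using is_tree_D(3)[OF T] r x by (simp add: tree_conn_erel)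
    thus ?thesis
    proof (cases rule: converse_rtranclE)
      case (step y) hence "y \<in> nb TE r" by (simp add: nb_def)
      thus ?thesis using True by simp
    qed simp
  qed
  hence "N = {r}" using r by blast
  thus ?thesis using True by simp
next
  case False
  then obtain b where b: "b \<in> nb TE r" by auto
  hence e: "{r,b} \<in> TE" by (simp add: nb_def)
  have "N = tcomp TE r b \<union> tcomp TE b r" using T1(2)[OF T e] by simp
  also have "\<dots> = insert r (\<Union>c\<in>nb TE r. tcomp TE c r)" using T2[OF T e] b by auto
  finally show ?thesis .
qed

lemma TC:
  assumes e: "{x,y} \<in> TE" and y: "y \<in> S" and x: "x \<notin> S"
    and conn: "\<forall>z\<in>S. (y,z) \<in> (erel TE \<inter> S \<times> S)\<^sup>*"
    and bd: "\<forall>u z. {u,z} \<in> TE \<longrightarrow> u \<in> S \<longrightarrow> z \<notin> S \<longrightarrow> {u,z} = {x,y}"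
  shows "tcomp TE y x = S"
proof
  let ?R = "erel (TE - {{y,x}})"
  show "S \<subseteq> tcomp TE y x"
  proof
    fix z assume "z \<in> S"
    hence "(y,z) \<in> (erel TE \<inter> S \<times> S)\<^sup>*" using conn by auto
    moreover have "erel TE \<inter> S \<times> S \<subseteq> ?R" using x by (auto simp: doubleton_eq_iff)
    ultimately show "z \<in> tcomp TE y x" using rtrancl_mono by (auto simp: tcomp_erel)
  qed
  show "tcomp TE y x \<subseteq> S"
  proof
    fix z assume "z \<in> tcomp TE y x"
    hence "(y,z) \<in> ?R\<^sup>*" by (simp add: tcomp_erel)
    thus "z \<in> S"
    proof (induction rule: rtrancl_induct)
      case (step u z)
      thus ?case using bd by (auto simp: insert_commute)
    qed (rule y)
  qed
qed




datatype 'a bt = Lf 'a | Nd "'a bt" "'a bt"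

fun sz :: "'a bt \<Rightarrow> nat" where
  "sz (Lf v) = 1" | "sz (Nd l r) = Suc (sz l + sz r)"

fun lvs :: "'a bt \<Rightarrow> 'a set" where
  "lvs (Lf v) = {v}" | "lvs (Nd l r) = lvs l \<union> lvs r"

fun wfb :: "'a bt \<Rightarrow> bool" where
  "wfb (Lf v) = True" | "wfb (Nd l r) = (wfb l \<and> wfb r \<and> lvs l \<inter> lvs r = {})"

fun subts :: "'a bt \<Rightarrow> 'a bt set" where
  "subts (Lf v) = {Lf v}" | "subts (Nd l r) = insert (Nd l r) (subts l \<union> subts r)"

fun eds :: "nat \<Rightarrow> 'a bt \<Rightarrow> nat set set" where
  "eds h (Lf v) = {}"
| "eds h (Nd l r) = {{h, Suc h}, {h, Suc h + sz l}} \<union> eds (Suc h) l \<union> eds (Suc h + sz l) r"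

fun lab :: "nat \<Rightarrow> 'a bt \<Rightarrow> nat \<Rightarrow> 'a" where
  "lab h (Lf v) = (\<lambda>x. v)"
| "lab h (Nd l r) = (\<lambda>x. if x < Suc h + sz l then lab (Suc h) l x else lab (Suc h + sz l) r x)"

fun lfpos :: "nat \<Rightarrow> 'a bt \<Rightarrow> nat set" where
  "lfpos h (Lf v) = {h}" | "lfpos h (Nd l r) = lfpos (Suc h) l \<union> lfpos (Suc h + sz l) r"

fun subp :: "nat \<Rightarrow> 'a bt \<Rightarrow> (nat \<times> 'a bt) set" where
  "subp h (Lf v) = {(h, Lf v)}"
| "subp h (Nd l r) = insert (h, Nd l r) (subp (Suc h) l \<union> subp (Suc h + sz l) r)"

fun lnb :: "nat \<Rightarrow> 'a bt \<Rightarrow> nat \<Rightarrow> nat set" where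
  "lnb h (Lf v) x = {}"
| "lnb h (Nd l r) x = (if x = h then {Suc h, Suc h + sz l} else {})
     \<union> (if x = Suc h \<or> x = Suc h + sz l then {h} else {})
     \<union> lnb (Suc h) l x \<union> lnb (Suc h + sz l) r x"

definition nodes :: "nat \<Rightarrow> 'a bt \<Rightarrow> nat set" where
  "nodes h T = {h..<h + sz T}"

lemma sz_pos[simp]: "sz T > 0" by (cases T) auto

lemma sz_ne0[simp]: "sz T \<noteq> 0" using sz_pos[of T] by linarith

lemma finite_nodes[simp]: "finite (nodes h T)" by (simp add: nodes_def)

lemma eds_sub: "e \<in> eds h T \<Longrightarrow> \<exists>u v. u \<in> nodes h T \<and> v \<in> nodes h T \<and> u \<noteq> v \<and> e = {u,v}"
proof (induction T arbitrary: h)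
  case (Lf v) thus ?case by simp
next
  case (Nd l r)
  have sl: "sz l > 0" "sz r > 0" using sz_pos by auto
  from Nd.prems consider "e = {h, Suc h}" | "e = {h, Suc h + sz l}" | "e \<in> eds (Suc h) l" | "e \<in> eds (Suc h + sz l) r"
    by auto
  thus ?case
  proof cases
    case 1 thus ?thesis using sl by (intro exI[of _ h] exI[of _ "Suc h"]) (auto simp: nodes_def)
  next
    case 2 thus ?thesis using sl by (intro exI[of _ h] exI[of _ "Suc h + sz l"]) (auto simp: nodes_def)
  next
    case 3 from Nd.IH(1)[OF this] obtain u v where "u \<in> nodes (Suc h) l" "v \<in> nodes (Suc h) l" "u \<noteq> v" "e = {u,v}" by blast
    thus ?thesis by (intro exI[of _ u] exI[of _ v]) (auto simp: nodes_def)
  next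
    case 4 from Nd.IH(2)[OF this] obtain u v where "u \<in> nodes (Suc h + sz l) r" "v \<in> nodes (Suc h + sz l) r" "u \<noteq> v" "e = {u,v}" by blast
    thus ?thesis by (intro exI[of _ u] exI[of _ v]) (auto simp: nodes_def)
  qed
qed

lemma eds_ok: "edges_ok (nodes h T) (eds h T)"
  using eds_sub unfolding edges_ok_def by blast

lemma eds_in: "e \<in> eds h T \<Longrightarrow> e \<subseteq> nodes h T"
  using eds_sub by blast

lemma finite_eds: "finite (eds h T)"
  by (induction T arbitrary: h) auto

lemma card_eds: "card (eds h T) + 1 = sz T"
proof (induction T arbitrary: h)
  case (Lf v) thus ?case by simp
next
  case (Nd l r)
  have sl: "sz l > 0" "sz r > 0" using sz_pos by auto
  let ?A = "{{h, Suc h}, {h, Suc h + sz l}}"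
  have d1: "eds (Suc h) l \<inter> eds (Suc h + sz l) r = {}"
  proof (rule ccontr)
    assume "\<not> ?thesis"
    then obtain e where e: "e \<in> eds (Suc h) l" "e \<in> eds (Suc h + sz l) r" by auto
    obtain u v where "e = {u,v}" using eds_sub[OF e(1)] by blast
    thus False using eds_in[OF e(1)] eds_in[OF e(2)] by (auto simp: nodes_def)
  qed
  have "h \<notin> e" if "e \<in> eds (Suc h) l \<union> eds (Suc h + sz l) r" for e
    using that eds_in[of e "Suc h" l] eds_in[of e "Suc h + sz l" r] by (force simp: nodes_def)
  hence d2: "?A \<inter> (eds (Suc h) l \<union> eds (Suc h + sz l) r) = {}" by blast
  have cA: "card ?A = 2" using sl by (auto simp: doubleton_eq_iff)
  have eq: "eds h (Nd l r) = ?A \<union> (eds (Suc h) l \<union> eds (Suc h + sz l) r)" by simp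
  have "card (eds h (Nd l r)) = card ?A + card (eds (Suc h) l \<union> eds (Suc h + sz l) r)"
    unfolding eq by (rule card_Un_disjoint) (use d2 finite_eds in auto)
  also have "card (eds (Suc h) l \<union> eds (Suc h + sz l) r) = card (eds (Suc h) l) + card (eds (Suc h + sz l) r)"
    by (rule card_Un_disjoint) (use d1 finite_eds in auto)
  hence "card ?A + card (eds (Suc h) l \<union> eds (Suc h + sz l) r) = 2 + card (eds (Suc h) l) + card (eds (Suc h + sz l) r)"
    using cA by simp
  finally show ?case using Nd.IH[of "Suc h"] Nd.IH(2)[of "Suc h + sz l"] by simp
qed

lemma conn_eds: "x \<in> nodes h T \<Longrightarrow> (h,x) \<in> (erel (eds h T) \<inter> nodes h T \<times> nodes h T)\<^sup>*"
proof (induction T arbitrary: h x)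
  case (Lf v) thus ?case by (simp add: nodes_def)
next
  case (Nd l r)
  let ?R = "erel (eds h (Nd l r)) \<inter> nodes h (Nd l r) \<times> nodes h (Nd l r)"
  have sl: "sz l > 0" "sz r > 0" using sz_pos by auto
  have subl: "erel (eds (Suc h) l) \<inter> nodes (Suc h) l \<times> nodes (Suc h) l \<subseteq> ?R"
    by (auto simp: erel_def nodes_def)
  have subr: "erel (eds (Suc h + sz l) r) \<inter> nodes (Suc h + sz l) r \<times> nodes (Suc h + sz l) r \<subseteq> ?R"
    by (auto simp: erel_def nodes_def)
  have e1: "(h, Suc h) \<in> ?R" using sl by (auto simp: nodes_def)
  have e2: "(h, Suc h + sz l) \<in> ?R" using sl by (auto simp: nodes_def)
  consider "x = h" | "x \<in> nodes (Suc h) l" | "x \<in> nodes (Suc h + sz l) r"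
    using Nd.prems unfolding nodes_def by (cases "x = h"; cases "x < Suc h + sz l") auto
  thus ?case
  proof cases
    case 1 thus ?thesis by simp
  next
    case 2
    have "(Suc h, x) \<in> ?R\<^sup>*" using Nd.IH(1)[OF 2] rtrancl_mono[OF subl] by blast
    thus ?thesis by (rule converse_rtrancl_into_rtrancl[OF e1])
  next
    case 3
    have "(Suc h + sz l, x) \<in> ?R\<^sup>*" using Nd.IH(2)[OF 3] rtrancl_mono[OF subr] by blast
    thus ?thesis by (rule converse_rtrancl_into_rtrancl[OF e2])
  qed
qed

lemma is_tree_eds: "is_tree (nodes h T) (eds h T)"
proof -
  have "tree_conn (eds h T) (nodes h T)"
    unfolding tree_conn_erel
  proof (intro ballI)
    fix x y assume "x \<in> nodes h T" "y \<in> nodes h T"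
    hence "(h,x) \<in> (erel (eds h T) \<inter> nodes h T \<times> nodes h T)\<^sup>*"
          "(h,y) \<in> (erel (eds h T) \<inter> nodes h T \<times> nodes h T)\<^sup>*" using conn_eds by auto
    moreover have "sym (erel (eds h T) \<inter> nodes h T \<times> nodes h T)"
      using sym_erel by (auto simp: sym_def)
    ultimately show "(x,y) \<in> (erel (eds h T) \<inter> nodes h T \<times> nodes h T)\<^sup>*"
      by (metis rtrancl_trans sym_def sym_rtrancl)
  qed
  moreover have "nodes h T \<noteq> {}" using sz_pos[of T] by (auto simp: nodes_def)
  moreover have "card (nodes h T) = sz T" by (simp add: nodes_def)
  ultimately show ?thesis using eds_ok[of h T] card_eds[of h T]
    by (auto simp: is_tree_def edges_ok_def nodes_def)
qed

lemma nb_eds: "nb (eds h T) x = lnb h T x"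
proof (induction T arbitrary: h)
  case (Lf v) thus ?case by (simp add: nb_def)
next
  case (Nd l r)
  have "nb (eds h (Nd l r)) x = nb {{h, Suc h}, {h, Suc h + sz l}} x \<union> nb (eds (Suc h) l) x \<union> nb (eds (Suc h + sz l) r) x"
    by (auto simp: nb_def)
  moreover have "nb {{h, Suc h}, {h, Suc h + sz l}} x = (if x = h then {Suc h, Suc h + sz l} else {})
     \<union> (if x = Suc h \<or> x = Suc h + sz l then {h} else {})"
    by (auto simp: nb_def doubleton_eq_iff)
  ultimately show ?case using Nd.IH by simp
qed

lemma lnb_out: "x \<notin> nodes h T \<Longrightarrow> lnb h T x = {}"
  by (induction T arbitrary: h) (auto simp: nodes_def)

lemma lnb_in: "lnb h T x \<subseteq> nodes h T"
proof (induction T arbitrary: h)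
  case (Nd l r)
  from Nd.IH(1)[of "Suc h"] Nd.IH(2)[of "Suc h + sz l"] show ?case
    by (auto simp: nodes_def)
qed simp

lemma lfp_in: "lfpos h T \<subseteq> nodes h T"
proof (induction T arbitrary: h)
  case (Nd l r)
  from Nd.IH(1)[of "Suc h"] Nd.IH(2)[of "Suc h + sz l"] show ?case
    by (auto simp: nodes_def)
qed (simp add: nodes_def)

lemma subp_self[simp]: "(h,T) \<in> subp h T" by (cases T) auto

lemma root_lfp: "h \<in> lfpos h T \<longleftrightarrow> (\<exists>v. T = Lf v)"
proof (cases T)
  case (Nd l r)
  have "h \<notin> lfpos (Suc h) l" "h \<notin> lfpos (Suc h + sz l) r"
    using lfp_in[of "Suc h" l] lfp_in[of "Suc h + sz l" r] by (auto simp: nodes_def)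
  thus ?thesis using Nd by simp
qed simp

lemma card_lnb:
  "x \<in> nodes h T \<Longrightarrow> card (lnb h T x) =
     (if x = h then (case T of Lf v \<Rightarrow> 0 | Nd l r \<Rightarrow> 2) else if x \<in> lfpos h T then 1 else 3)"
proof (induction T arbitrary: h x)
  case (Lf v) thus ?case by (simp add: nodes_def)
next
  case (Nd l r)
  have sl: "sz l > 0" "sz r > 0" using sz_pos by auto
  consider "x = h" | "x \<in> nodes (Suc h) l" | "x \<in> nodes (Suc h + sz l) r"
    using Nd.prems unfolding nodes_def by (cases "x = h"; cases "x < Suc h + sz l") auto
  thus ?case
  proof cases
    case 1
    have "lnb (Suc h) l x = {}" "lnb (Suc h + sz l) r x = {}" using 1
      by (auto intro!: lnb_out simp: nodes_def)
    thus ?thesis using 1 sl by auto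
  next
    case 2
    have h: "x \<noteq> h" "x \<noteq> Suc h + sz l" using 2 by (auto simp: nodes_def)
    have rr: "lnb (Suc h + sz l) r x = {}" using 2 by (auto intro!: lnb_out simp: nodes_def)
    have xl: "x \<notin> lfpos (Suc h + sz l) r" using 2 lfp_in[of "Suc h + sz l" r] by (auto simp: nodes_def)
    have ol: "h \<notin> lnb (Suc h) l x" using lnb_in[of "Suc h" l x] by (auto simp: nodes_def)
    have fin: "finite (lnb (Suc h) l x)" using lnb_in[of "Suc h" l x] finite_subset by (auto simp: nodes_def)
    show ?thesis
    proof (cases "x = Suc h")
      case True
      have "lnb h (Nd l r) x = insert h (lnb (Suc h) l x)" using h True rr by auto
      hence "card (lnb h (Nd l r) x) = Suc (card (lnb (Suc h) l x))" using ol fin by simp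
      thus ?thesis using Nd.IH(1)[OF 2] True h xl root_lfp[of "Suc h" l] by (cases l) auto
    next
      case False
      have "lnb h (Nd l r) x = lnb (Suc h) l x" using h False rr by auto
      thus ?thesis using Nd.IH(1)[OF 2] False h xl by simp
    qed
  next
    case 3
    have h: "x \<noteq> h" "x \<noteq> Suc h" using 3 sl by (auto simp: nodes_def)
    have rr: "lnb (Suc h) l x = {}" using 3 by (auto intro!: lnb_out simp: nodes_def)
    have xl: "x \<notin> lfpos (Suc h) l" using 3 lfp_in[of "Suc h" l] by (auto simp: nodes_def)
    have ol: "h \<notin> lnb (Suc h + sz l) r x" using lnb_in[of "Suc h + sz l" r x] by (auto simp: nodes_def)
    have fin: "finite (lnb (Suc h + sz l) r x)" using lnb_in[of "Suc h + sz l" r x] finite_subset by (auto simp: nodes_def)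
    show ?thesis
    proof (cases "x = Suc h + sz l")
      case True
      have "lnb h (Nd l r) x = insert h (lnb (Suc h + sz l) r x)" using h True rr by auto
      hence "card (lnb h (Nd l r) x) = Suc (card (lnb (Suc h + sz l) r x))" using ol fin by simp
      thus ?thesis using Nd.IH(2)[OF 3] True h xl root_lfp[of "Suc h + sz l" r] by (cases r) auto
    next
      case False
      have "lnb h (Nd l r) x = lnb (Suc h + sz l) r x" using h False rr by auto
      thus ?thesis using Nd.IH(2)[OF 3] False h xl by simp
    qed
  qed
qed

lemma tdeg_eds: "x \<in> nodes h T \<Longrightarrow> tdegree (eds h T) x = card (lnb h T x)"
  using tdegree_nb[OF eds_ok finite_nodes, of h T x] by (simp add: nb_eds)

lemma tleaves_eds: "tleaves (nodes h T) (eds h T) = lfpos h T"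
proof -
  have "x \<in> nodes h T \<Longrightarrow> tdegree (eds h T) x \<le> 1 \<longleftrightarrow> x \<in> lfpos h T" for x
    using tdeg_eds[of x h T] card_lnb[of x h T] root_lfp[of h T] by (cases T) (auto simp: nodes_def)
  thus ?thesis using lfp_in by (auto simp: tleaves_def)
qed

lemma deg3_eds: "x \<in> nodes h T \<Longrightarrow> tdegree (eds h T) x \<le> 3"
  using tdeg_eds[of x h T] card_lnb[of x h T] by (cases T) auto

lemma lab_bij: "wfb T \<Longrightarrow> bij_betw (lab h T) (lfpos h T) (lvs T)"
proof (induction T arbitrary: h)
  case (Lf v) thus ?case by (simp add: bij_betw_def)
next
  case (Nd l r)
  let ?f = "lab h (Nd l r)"
  have bl: "bij_betw (lab (Suc h) l) (lfpos (Suc h) l) (lvs l)" using Nd by simp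
  have br: "bij_betw (lab (Suc h + sz l) r) (lfpos (Suc h + sz l) r) (lvs r)" using Nd by simp
  have fl: "\<And>x. x\<in>lfpos (Suc h) l \<Longrightarrow> ?f x = lab (Suc h) l x" using lfp_in[of "Suc h" l] by (auto simp: nodes_def)
  have fr: "\<And>x. x\<in>lfpos (Suc h + sz l) r \<Longrightarrow> ?f x = lab (Suc h + sz l) r x" using lfp_in[of "Suc h + sz l" r] by (auto simp: nodes_def)
  have "bij_betw ?f (lfpos (Suc h) l) (lvs l) = bij_betw (lab (Suc h) l) (lfpos (Suc h) l) (lvs l)"
    by (rule bij_betw_cong) (rule fl)
  hence bl': "bij_betw ?f (lfpos (Suc h) l) (lvs l)" using bl by simp
  have "bij_betw ?f (lfpos (Suc h + sz l) r) (lvs r) = bij_betw (lab (Suc h + sz l) r) (lfpos (Suc h + sz l) r) (lvs r)"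
    by (rule bij_betw_cong) (rule fr)
  hence br': "bij_betw ?f (lfpos (Suc h + sz l) r) (lvs r)" using br by simp
  have "bij_betw ?f (lfpos (Suc h) l \<union> lfpos (Suc h + sz l) r) (lvs l \<union> lvs r)"
    using bij_betw_combine[OF bl' br'] Nd.prems by simp
  thus ?case by simp
qed

lemma subp_range: "(q,s) \<in> subp h T \<Longrightarrow> h \<le> q \<and> q + sz s \<le> h + sz T \<and> s \<in> subts T"
  by (induction T arbitrary: h) (fastforce)+

lemma subp_nodes: "(q,s) \<in> subp h T \<Longrightarrow> nodes q s \<subseteq> nodes h T"
  using subp_range by (fastforce simp: nodes_def)

lemma subp_eds: "(q,s) \<in> subp h T \<Longrightarrow> eds q s \<subseteq> eds h T"
  by (induction T arbitrary: h) auto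

lemma subp_lfp: "(q,s) \<in> subp h T \<Longrightarrow> lfpos h T \<inter> nodes q s = lfpos q s"
proof (induction T arbitrary: h)
  case (Lf v) thus ?case by (simp add: nodes_def)
next
  case (Nd l r)
  have A: "lfpos h (Nd l r) \<inter> nodes h (Nd l r) = lfpos h (Nd l r)" using lfp_in by blast
  from Nd.prems consider "(q,s) = (h, Nd l r)" | "(q,s) \<in> subp (Suc h) l" | "(q,s) \<in> subp (Suc h + sz l) r" by auto
  thus ?case
  proof cases
    case 1 thus ?thesis using A by simp
  next
    case 2
    have "lfpos (Suc h + sz l) r \<inter> nodes q s = {}"
      using subp_nodes[OF 2] lfp_in[of "Suc h + sz l" r] by (auto simp: nodes_def)
    thus ?thesis using Nd.IH(1)[OF 2] by auto
  next
    case 3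
    have "lfpos (Suc h) l \<inter> nodes q s = {}"
      using subp_nodes[OF 3] lfp_in[of "Suc h" l] by (auto simp: nodes_def)
    thus ?thesis using Nd.IH(2)[OF 3] by auto
  qed
qed

lemma subp_lab: "(q,s) \<in> subp h T \<Longrightarrow> x \<in> nodes q s \<Longrightarrow> lab h T x = lab q s x"
proof (induction T arbitrary: h)
  case (Lf v) thus ?case by simp
next
  case (Nd l r)
  from Nd.prems(1) consider "(q,s) = (h, Nd l r)" | "(q,s) \<in> subp (Suc h) l" | "(q,s) \<in> subp (Suc h + sz l) r" by auto
  thus ?case
  proof cases
    case 1 thus ?thesis by simp
  next
    case 2 thus ?thesis using Nd.IH(1)[OF 2 Nd.prems(2)] subp_nodes[OF 2] Nd.prems(2) by (auto simp: nodes_def)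
  next
    case 3 thus ?thesis using Nd.IH(2)[OF 3 Nd.prems(2)] subp_nodes[OF 3] Nd.prems(2) by (auto simp: nodes_def)
  qed
qed

lemma edge_boundary:
  "e \<in> eds h T \<Longrightarrow> \<exists>x q s. e = {x,q} \<and> (q,s) \<in> subp h T \<and> q \<noteq> h \<and> x \<notin> nodes q s \<and>
     (\<forall>u z. {u,z} \<in> eds h T \<longrightarrow> u \<in> nodes q s \<longrightarrow> z \<notin> nodes q s \<longrightarrow> {u,z} = {x,q})"
proof (induction T arbitrary: h)
  case (Lf v) thus ?case by simp
next
  case (Nd l r)
  have sl: "sz l > 0" "sz r > 0" using sz_pos by auto
  have inl: "\<And>e. e \<in> eds (Suc h) l \<Longrightarrow> e \<subseteq> {Suc h..<Suc h + sz l}" using eds_in by (fastforce simp: nodes_def)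
  have inr: "\<And>e. e \<in> eds (Suc h + sz l) r \<Longrightarrow> e \<subseteq> {Suc h + sz l..<Suc h + sz l + sz r}" using eds_in by (fastforce simp: nodes_def)
  from Nd.prems consider "e = {h, Suc h}" | "e = {h, Suc h + sz l}" | "e \<in> eds (Suc h) l" | "e \<in> eds (Suc h + sz l) r"
    by auto
  thus ?case
  proof cases
    case 1
    show ?thesis
    proof (intro exI conjI allI impI)
      show "e = {h, Suc h}" "(Suc h, l) \<in> subp h (Nd l r)" "Suc h \<noteq> h" "h \<notin> nodes (Suc h) l" using 1 by (auto simp: nodes_def)
      fix u z assume uz: "{u,z} \<in> eds h (Nd l r)" "u \<in> nodes (Suc h) l" "z \<notin> nodes (Suc h) l"
      from uz(1) consider "{u,z} = {h, Suc h}" | "{u,z} = {h, Suc h + sz l}" | "{u,z} \<in> eds (Suc h) l" | "{u,z} \<in> eds (Suc h + sz l) r"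
        by auto
      thus "{u,z} = {h, Suc h}"
      proof cases
        case 2 thus ?thesis using uz(2) by (auto simp: nodes_def doubleton_eq_iff)
      next
        case 3 thus ?thesis using uz(2,3) inl[OF 3] by (auto simp: nodes_def)
      next
        case 4 thus ?thesis using uz(2,3) inr[OF 4] by (auto simp: nodes_def)
      qed simp
    qed
  next
    case 2
    show ?thesis
    proof (intro exI conjI allI impI)
      show "e = {h, Suc h + sz l}" "(Suc h + sz l, r) \<in> subp h (Nd l r)" "Suc h + sz l \<noteq> h" "h \<notin> nodes (Suc h + sz l) r" using 2 by (auto simp: nodes_def)
      fix u z assume uz: "{u,z} \<in> eds h (Nd l r)" "u \<in> nodes (Suc h + sz l) r" "z \<notin> nodes (Suc h + sz l) r"
      from uz(1) consider "{u,z} = {h, Suc h}" | "{u,z} = {h, Suc h + sz l}" | "{u,z} \<in> eds (Suc h) l" | "{u,z} \<in> eds (Suc h + sz l) r"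
        by auto
      thus "{u,z} = {h, Suc h + sz l}"
      proof cases
        case 1 thus ?thesis using uz(2) by (auto simp: nodes_def doubleton_eq_iff)
      next
        case 3 thus ?thesis using uz(2,3) inl[OF 3] by (auto simp: nodes_def)
      next
        case 4 thus ?thesis using uz(2,3) inr[OF 4] by (auto simp: nodes_def)
      qed simp
    qed
  next
    case 3
    then obtain x q s where xqs: "e = {x,q}" "(q,s) \<in> subp (Suc h) l" "q \<noteq> Suc h" "x \<notin> nodes q s"
      "\<forall>u z. {u,z} \<in> eds (Suc h) l \<longrightarrow> u \<in> nodes q s \<longrightarrow> z \<notin> nodes q s \<longrightarrow> {u,z} = {x,q}"
      using Nd.IH(1) by blast
    have rng: "Suc h \<le> q" "q + sz s \<le> Suc h + sz l" using subp_range[OF xqs(2)] by auto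
    show ?thesis
    proof (intro exI conjI allI impI)
      show "e = {x,q}" "(q,s) \<in> subp h (Nd l r)" "q \<noteq> h" "x \<notin> nodes q s" using xqs rng by auto
      fix u z assume uz: "{u,z} \<in> eds h (Nd l r)" "u \<in> nodes q s" "z \<notin> nodes q s"
      from uz(1) consider "{u,z} = {h, Suc h}" | "{u,z} = {h, Suc h + sz l}" | "{u,z} \<in> eds (Suc h) l" | "{u,z} \<in> eds (Suc h + sz l) r"
        by auto
      thus "{u,z} = {x,q}"
      proof cases
        case 1 thus ?thesis using uz(2) rng xqs(3) by (auto simp: nodes_def doubleton_eq_iff)
      next
        case 2 thus ?thesis using uz(2) rng by (auto simp: nodes_def doubleton_eq_iff)
      next
        case 3 thus ?thesis using uz xqs(5) by blast
      next
        case 4 thus ?thesis using uz(2) rng inr[OF 4] by (auto simp: nodes_def)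
      qed
    qed
  next
    case 4
    then obtain x q s where xqs: "e = {x,q}" "(q,s) \<in> subp (Suc h + sz l) r" "q \<noteq> Suc h + sz l" "x \<notin> nodes q s"
      "\<forall>u z. {u,z} \<in> eds (Suc h + sz l) r \<longrightarrow> u \<in> nodes q s \<longrightarrow> z \<notin> nodes q s \<longrightarrow> {u,z} = {x,q}"
      using Nd.IH(2) by blast
    have rng: "Suc h + sz l \<le> q" "q + sz s \<le> Suc h + sz l + sz r" using subp_range[OF xqs(2)] by auto
    show ?thesis
    proof (intro exI conjI allI impI)
      show "e = {x,q}" "(q,s) \<in> subp h (Nd l r)" "q \<noteq> h" "x \<notin> nodes q s" using xqs rng by auto
      fix u z assume uz: "{u,z} \<in> eds h (Nd l r)" "u \<in> nodes q s" "z \<notin> nodes q s"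
      from uz(1) consider "{u,z} = {h, Suc h}" | "{u,z} = {h, Suc h + sz l}" | "{u,z} \<in> eds (Suc h) l" | "{u,z} \<in> eds (Suc h + sz l) r"
        by auto
      thus "{u,z} = {x,q}"
      proof cases
        case 1
        have "Suc h < q" using rng sz_pos[of l] by linarith
        thus ?thesis using 1 uz(2) by (auto simp: nodes_def doubleton_eq_iff)
      next
        case 2 thus ?thesis using uz(2) rng xqs(3) by (auto simp: nodes_def doubleton_eq_iff)
      next
        case 3 thus ?thesis using uz(2) rng inl[OF 3] by (auto simp: nodes_def)
      next
        case 4 thus ?thesis using uz xqs(5) by blast
      qed
    qed
  qed
qed

lemma subts_wfb: "s \<in> subts T \<Longrightarrow> wfb T \<Longrightarrow> wfb s"
  by (induction T) auto

lemma subts_lvs: "s \<in> subts T \<Longrightarrow> lvs s \<subseteq> lvs T"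
  by (induction T) auto

lemma BD1: "wfb T \<Longrightarrow> branch_decomp (lvs T) (nodes 0 T) (eds 0 T) (lab 0 T)"
  unfolding branch_decomp_def using is_tree_eds deg3_eds tleaves_eds lab_bij by metis

lemma BD2:
  assumes w: "wfb T" and e: "{a,b} \<in> eds 0 T"
  shows "\<exists>s\<in>subts T. lab 0 T ` (tleaves (nodes 0 T) (eds 0 T) \<inter> tcomp (eds 0 T) a b) \<in> {lvs s, lvs T - lvs s}"
proof -
  let ?N = "nodes 0 T" and ?TE = "eds 0 T" and ?f = "lab 0 T"
  obtain x q s where xqs: "{a,b} = {x,q}" "(q,s) \<in> subp 0 T" "q \<noteq> 0" "x \<notin> nodes q s"
    "\<forall>u z. {u,z} \<in> ?TE \<longrightarrow> u \<in> nodes q s \<longrightarrow> z \<notin> nodes q s \<longrightarrow> {u,z} = {x,q}"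
    using edge_boundary[OF e] by blast
  have sT: "s \<in> subts T" using subp_range[OF xqs(2)] by simp
  have ws: "wfb s" using subts_wfb[OF sT w] .
  have exq: "{x,q} \<in> ?TE" using e xqs(1) by simp
  have conn: "\<forall>z\<in>nodes q s. (q,z) \<in> (erel ?TE \<inter> nodes q s \<times> nodes q s)\<^sup>*"
  proof
    fix z assume "z \<in> nodes q s"
    hence "(q,z) \<in> (erel (eds q s) \<inter> nodes q s \<times> nodes q s)\<^sup>*" by (rule conn_eds)
    moreover have "erel (eds q s) \<inter> nodes q s \<times> nodes q s \<subseteq> erel ?TE \<inter> nodes q s \<times> nodes q s"
      using erel_mono[OF subp_eds[OF xqs(2)]] by blast
    ultimately show "(q,z) \<in> (erel ?TE \<inter> nodes q s \<times> nodes q s)\<^sup>*" using rtrancl_mono by blast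
  qed
  have tq: "tcomp ?TE q x = nodes q s"
    by (rule TC[OF exq _ xqs(4) conn xqs(5)]) (simp add: nodes_def)
  have T: "is_tree ?N ?TE" by (rule is_tree_eds)
  have tx: "tcomp ?TE x q = ?N - nodes q s"
    using T1[OF T exq] tq by blast
  have lv: "tleaves ?N ?TE = lfpos 0 T" by (rule tleaves_eds)
  have A1: "?f ` (tleaves ?N ?TE \<inter> tcomp ?TE q x) = lvs s"
  proof -
    have "tleaves ?N ?TE \<inter> tcomp ?TE q x = lfpos q s" using lv tq subp_lfp[OF xqs(2)] by simp
    moreover have "?f ` lfpos q s = lab q s ` lfpos q s"
      using subp_lab[OF xqs(2)] lfp_in[of q s] by (auto simp: image_def) (metis subsetD)+
    moreover have "lab q s ` lfpos q s = lvs s" using lab_bij[OF ws] by (simp add: bij_betw_def)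
    ultimately show ?thesis by simp
  qed
  have bij: "bij_betw ?f (lfpos 0 T) (lvs T)" using lab_bij[OF w] .
  have A2: "?f ` (tleaves ?N ?TE \<inter> tcomp ?TE x q) = lvs T - lvs s"
  proof -
    have "tleaves ?N ?TE \<inter> tcomp ?TE x q = lfpos 0 T - (lfpos 0 T \<inter> tcomp ?TE q x)"
      using lv tx lfp_in[of 0 T] tq by auto
    hence "?f ` (tleaves ?N ?TE \<inter> tcomp ?TE x q) = ?f ` lfpos 0 T - ?f ` (lfpos 0 T \<inter> tcomp ?TE q x)"
      using bij inj_on_image_set_diff[of ?f "lfpos 0 T" "lfpos 0 T" "lfpos 0 T \<inter> tcomp ?TE q x"]
      by (simp add: bij_betw_def)
    thus ?thesis using A1 lv bij by (simp add: bij_betw_def)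
  qed
  from xqs(1) have "(a = x \<and> b = q) \<or> (a = q \<and> b = x)" by (auto simp: doubleton_eq_iff)
  thus ?thesis using A1 A2 sT by blast
qed




definition cutp :: "'a set \<Rightarrow> ('a \<Rightarrow> 'a \<Rightarrow> bool) \<Rightarrow> 'a set \<Rightarrow> ('a \<times> 'a) set" where
  "cutp V E A = {(u, v). u \<in> A \<and> v \<in> V - A \<and> E u v}"

definition matchings :: "'a set \<Rightarrow> ('a \<Rightarrow> 'a \<Rightarrow> bool) \<Rightarrow> 'a set \<Rightarrow> ('a \<times> 'a) set set" where
  "matchings V E A = {M. M \<subseteq> cutp V E A \<and> inj_on fst M \<and> inj_on snd M}"

lemma mm_alt: "mm V E A = Max (card ` matchings V E A)"
  unfolding mm_def matchings_def cutp_def by (rule arg_cong[where f=Max]) auto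

lemma matchings_finite:
  assumes "finite V" "A \<subseteq> V" shows "finite (matchings V E A)"
proof -
  have "matchings V E A \<subseteq> Pow (V \<times> V)" using assms(2) by (auto simp: matchings_def cutp_def)
  thus ?thesis using assms finite_subset by blast
qed

lemma matchings_ne: "{} \<in> matchings V E A" by (simp add: matchings_def)

lemma mm_exists:
  assumes "finite V" "A \<subseteq> V" shows "\<exists>M\<in>matchings V E A. card M = mm V E A"
proof -
  have "mm V E A \<in> card ` matchings V E A"
    unfolding mm_alt using matchings_finite[OF assms] matchings_ne[of V E A] by (intro Max_in) auto
  thus ?thesis by auto
qed

lemma mm_ge:
  assumes "finite V" "A \<subseteq> V" "M \<in> matchings V E A" shows "card M \<le> mm V E A"
  unfolding mm_alt using matchings_finite[OF assms(1,2)] assms(3) by (intro Max_ge) auto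

lemma mm_le_card:
  assumes fin: "finite V" and AV: "A \<subseteq> V" and fB: "finite Bg"
    and cov: "\<forall>u v. u \<in> A \<longrightarrow> v \<in> V - A \<longrightarrow> E u v \<longrightarrow> u \<in> Bg \<or> v \<in> Bg"
  shows "mm V E A \<le> card Bg"
proof -
  obtain M where M: "M \<in> matchings V E A" "card M = mm V E A" using mm_exists[OF fin AV] by blast
  let ?g = "\<lambda>p. if fst p \<in> Bg then fst p else snd p"
  have sub: "M \<subseteq> cutp V E A" and i1: "inj_on fst M" and i2: "inj_on snd M" using M(1) by (auto simp: matchings_def)
  have "inj_on ?g M"
  proof (rule inj_onI)
    fix p q assume p: "p \<in> M" and q: "q \<in> M" and eq: "?g p = ?g q"
    have pc: "fst p \<in> A" "snd p \<notin> A" "fst q \<in> A" "snd q \<notin> A" using sub p q by (auto simp: cutp_def)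
    show "p = q"
    proof (cases "fst p \<in> Bg")
      case True
      show ?thesis
      proof (cases "fst q \<in> Bg")
        case True thus ?thesis using \<open>fst p \<in> Bg\<close> eq i1 p q by (auto simp: inj_on_def)
      next
        case False thus ?thesis using \<open>fst p \<in> Bg\<close> eq pc by auto
      qed
    next
      case False
      show ?thesis
      proof (cases "fst q \<in> Bg")
        case True thus ?thesis using \<open>fst p \<notin> Bg\<close> eq pc by auto
      next
        case False thus ?thesis using \<open>fst p \<notin> Bg\<close> eq i2 p q by (auto simp: inj_on_def)
      qed
    qed
  qed
  moreover have "?g ` M \<subseteq> Bg"
  proof
    fix x assume "x \<in> ?g ` M"
    then obtain p where p: "p \<in> M" "x = ?g p" by auto
    obtain u v where [simp]: "p = (u,v)" by (cases p)
    have "u \<in> A" "v \<in> V - A" "E u v" using sub p by (auto simp: cutp_def)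
    hence "u \<in> Bg \<or> v \<in> Bg" using cov by blast
    thus "x \<in> Bg" using p(2) by auto
  qed
  ultimately have "card M \<le> card Bg" using fB card_image[of ?g M] card_mono[OF fB, of "?g ` M"] by linarith
  thus ?thesis using M(2) by simp
qed

lemma graph_sym: "graph V E \<Longrightarrow> E u v \<Longrightarrow> E v u" by (simp add: graph_def)
lemma graph_in: "graph V E \<Longrightarrow> E u v \<Longrightarrow> u \<in> V \<and> v \<in> V" by (simp add: graph_def)
lemma graph_irr: "graph V E \<Longrightarrow> \<not> E u u" by (simp add: graph_def)
lemma graph_fin: "graph V E \<Longrightarrow> finite V" by (simp add: graph_def)

lemma mm_compl:
  assumes G: "graph V E" and A: "A \<subseteq> V"
  shows "mm V E (V - A) = mm V E A"
proof -
  have VA: "V - (V - A) = A" using A by auto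
  have "card ` matchings V E (V - A) = card ` matchings V E A"
  proof -
    have 1: "prod.swap ` M \<in> matchings V E A" if "M \<in> matchings V E (V - A)" for M
      using that graph_sym[OF G] VA unfolding matchings_def cutp_def
      by (auto simp: inj_on_def)
    have 2: "prod.swap ` M \<in> matchings V E (V - A)" if "M \<in> matchings V E A" for M
      using that graph_sym[OF G] VA unfolding matchings_def cutp_def
      by (auto simp: inj_on_def)
    have c: "card (prod.swap ` M) = card M" for M :: "('a \<times> 'a) set"
      by (rule card_image) (metis inj_on_def swap_swap)
    show ?thesis
    proof
      show "card ` matchings V E (V - A) \<subseteq> card ` matchings V E A"
        using 1 c by (metis image_subsetI rev_image_eqI)
      show "card ` matchings V E A \<subseteq> card ` matchings V E (V - A)"
        using 2 c by (metis image_subsetI rev_image_eqI)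
    qed
  qed
  thus ?thesis by (simp add: mm_alt)
qed

lemma sm_le: "sm V E A \<le> max 1 (mm V E A)"
  by (simp add: sm_def)

lemma Sup_nat_le: "finite X \<Longrightarrow> (\<forall>x\<in>X. x \<le> (w::nat)) \<Longrightarrow> Sup X \<le> w"
  by (simp add: Sup_nat_def)

lemma le_Sup_nat: "finite X \<Longrightarrow> x \<in> X \<Longrightarrow> x \<le> Sup (X::nat set)"
  by (simp add: le_cSup_finite)

lemma cuts_finite:
  assumes "finite N" "edges_ok N TE"
  shows "finite {g a b | a b. {a,b} \<in> TE}"
proof -
  have "{g a b | a b. {a,b} \<in> TE} \<subseteq> (\<lambda>(a,b). g a b) ` (N \<times> N)"
    using edges_ok_edge[OF assms(2)] by fastforce
  thus ?thesis using assms(1) finite_subset by blast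
qed




lemma comb_lemma:
  "distinct ts \<Longrightarrow> ts \<noteq> [] \<Longrightarrow>
   (\<forall>a\<in>set ts. \<forall>b\<in>set ts. a \<noteq> b \<longrightarrow> lvs a \<inter> lvs b = {}) \<Longrightarrow>
   (\<forall>t\<in>set ts. wfb t \<and> (\<forall>s\<in>subts t. P (lvs s))) \<Longrightarrow>
   (\<forall>S. S \<subseteq> set ts \<longrightarrow> S \<noteq> {} \<longrightarrow> P (\<Union> (lvs ` S))) \<Longrightarrow>
   \<exists>T. wfb T \<and> (\<forall>s\<in>subts T. P (lvs s)) \<and> lvs T = \<Union> (lvs ` set ts)"
proof (induction ts)
  case Nil thus ?case by simp
next
  case (Cons t ts)
  show ?case
  proof (cases "ts = []")
    case True thus ?thesis using Cons.prems by auto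
  next
    case False
    have "\<exists>T. wfb T \<and> (\<forall>s\<in>subts T. P (lvs s)) \<and> lvs T = \<Union> (lvs ` set ts)"
    proof (rule Cons.IH)
      show "distinct ts" using Cons.prems(1) by simp
      show "ts \<noteq> []" by (rule False)
      show "\<forall>a\<in>set ts. \<forall>b\<in>set ts. a \<noteq> b \<longrightarrow> lvs a \<inter> lvs b = {}" using Cons.prems(3) by simp
      show "\<forall>t\<in>set ts. wfb t \<and> (\<forall>s\<in>subts t. P (lvs s))" using Cons.prems(4) by simp
      show "\<forall>S. S \<subseteq> set ts \<longrightarrow> S \<noteq> {} \<longrightarrow> P (\<Union> (lvs ` S))"
        using Cons.prems(5) by (meson set_subset_Cons subset_trans)
    qed
    then obtain R where R: "wfb R" "\<forall>s\<in>subts R. P (lvs s)" "lvs R = \<Union> (lvs ` set ts)" by blast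
    have tn: "t \<notin> set ts" using Cons.prems(1) by simp
    have disj: "lvs t \<inter> lvs R = {}" using Cons.prems(3) tn R(3) by auto
    have Pall: "P (\<Union> (lvs ` set (t # ts)))" using Cons.prems(5) by blast
    show ?thesis
    proof (intro exI conjI)
      show "wfb (Nd t R)" using R disj Cons.prems(4) by simp
      show "\<forall>s\<in>subts (Nd t R). P (lvs s)" using R Cons.prems(4) Pall by auto
      show "lvs (Nd t R) = \<Union> (lvs ` set (t # ts))" using R by simp
    qed
  qed
qed

locale TDL =
  fixes V :: "'a set" and E and N and TE and B and w :: nat
  assumes G: "graph V E" and TD: "tree_decomp V E N TE B" and bag: "\<forall>x\<in>N. card (B x) \<le> w"
begin

lemma T: "is_tree N TE" using TD by (simp add: tree_decomp_def)
lemma ok: "edges_ok N TE" using is_tree_D[OF T] by simp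
lemma finN: "finite N" using is_tree_D[OF T] by simp
lemma finV: "finite V" using G by (simp add: graph_def)
lemma Bsub: "x \<in> N \<Longrightarrow> B x \<subseteq> V" using TD by (simp add: tree_decomp_def)
lemma Vun: "(\<Union>x\<in>N. B x) = V" using TD by (simp add: tree_decomp_def)
lemma edge_bag: "E u v \<Longrightarrow> \<exists>x\<in>N. u \<in> B x \<and> v \<in> B x" using TD by (simp add: tree_decomp_def)
lemma bconn: "v \<in> V \<Longrightarrow> tree_conn TE {x \<in> N. v \<in> B x}" using TD by (simp add: tree_decomp_def)
lemma finB: "x \<in> N \<Longrightarrow> finite (B x)" using Bsub finV finite_subset by blast

definition Y :: "nat \<Rightarrow> nat \<Rightarrow> 'a set" where
  "Y t p = (\<Union>s\<in>tcomp TE t p. B s) - B p"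

definition good :: "'a bt \<Rightarrow> bool" where
  "good T \<longleftrightarrow> wfb T \<and> (\<forall>s\<in>subts T. mm V E (lvs s) \<le> w)"

lemma edgeN: "{a,b} \<in> TE \<Longrightarrow> a \<in> N \<and> b \<in> N \<and> a \<noteq> b"
  using edges_ok_edge[OF ok] by blast

lemma CROSS:
  assumes e: "{t,p} \<in> TE" and v: "v \<in> V" and x: "x \<in> N" "v \<in> B x" "x \<in> tcomp TE t p"
    and y: "y \<in> N" "v \<in> B y" "y \<notin> tcomp TE t p"
  shows "v \<in> B t \<and> v \<in> B p"
proof -
  let ?S = "{x \<in> N. v \<in> B x}"
  have "(x,y) \<in> (erel TE \<inter> ?S \<times> ?S)\<^sup>*" using bconn[OF v] x y by (simp add: tree_conn_erel)
  then obtain u z where uz: "(u,z) \<in> erel TE \<inter> ?S \<times> ?S" "u \<in> tcomp TE t p" "z \<notin> tcomp TE t p"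
    using exists_leaving_edge[of x y _ "tcomp TE t p"] x(3) y(3) by blast
  have "{u,z} = {t,p}"
  proof (rule ccontr)
    assume "{u,z} \<noteq> {t,p}"
    hence "(u,z) \<in> erel (TE - {{t,p}})" using uz(1) by simp
    moreover have "(t,u) \<in> (erel (TE - {{t,p}}))\<^sup>*" using uz(2) by (simp add: tcomp_erel)
    ultimately have "(t,z) \<in> (erel (TE - {{t,p}}))\<^sup>*" by (rule rtrancl_into_rtrancl[rotated])
    thus False using uz(3) by (simp add: tcomp_erel)
  qed
  moreover have "p \<notin> tcomp TE t p" using tree_L'[OF T e] .
  ultimately have "u = t" "z = p" using uz(2) by (auto simp: doubleton_eq_iff)
  thus ?thesis using uz(1) by auto
qed

lemma Y_sub: "{t,p} \<in> TE \<Longrightarrow> Y t p \<subseteq> V"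
  using Bsub tcomp_sub_N[OF T] edgeN unfolding Y_def by blast

lemma BAGLOC:
  assumes c: "c \<in> nb TE t" and u: "u \<in> Y c t" and s: "s \<in> N" "u \<in> B s"
  shows "s \<in> tcomp TE c t"
proof (rule ccontr)
  assume ns: "s \<notin> tcomp TE c t"
  have e: "{c,t} \<in> TE" using c by (simp add: nb_def insert_commute)
  obtain s0 where s0: "s0 \<in> tcomp TE c t" "u \<in> B s0" "u \<notin> B t" using u by (auto simp: Y_def)
  have s0N: "s0 \<in> N" using tcomp_sub_N[OF T] edgeN[OF e] s0(1) by blast
  have "u \<in> V" using Bsub[OF s0N] s0(2) by blast
  from CROSS[OF e this s0N s0(2) s0(1) s ns] s0(3) show False by simp
qed

lemma crossing:
  assumes t: "t \<in> N" and C: "C \<subseteq> nb TE t" and A: "A \<subseteq> V"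
    and hyp: "\<forall>u\<in>A - B t. \<exists>c\<in>C. u \<in> Y c t \<and> Y c t \<subseteq> A"
  shows "mm V E A \<le> w"
proof -
  have "mm V E A \<le> card (B t)"
  proof (rule mm_le_card[OF finV A finB[OF t]], intro allI impI)
    fix u v assume uv: "u \<in> A" "v \<in> V - A" "E u v"
    show "u \<in> B t \<or> v \<in> B t"
    proof (rule ccontr)
      assume nb: "\<not> (u \<in> B t \<or> v \<in> B t)"
      then obtain c where c: "c \<in> C" "u \<in> Y c t" "Y c t \<subseteq> A" using hyp uv(1) by blast
      obtain s where s: "s \<in> N" "u \<in> B s" "v \<in> B s" using edge_bag[OF uv(3)] by blast
      have "s \<in> tcomp TE c t" using BAGLOC[OF _ c(2) s(1,2)] c(1) C by blast
      hence "v \<in> Y c t" using s(3) nb by (auto simp: Y_def)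
      thus False using c(3) uv(2) by blast
    qed
  qed
  thus ?thesis using bag t by (meson le_trans)
qed

lemma Y_decomp:
  assumes e: "{t,p} \<in> TE"
  shows "Y t p = (B t - B p) \<union> (\<Union>c\<in>nb TE t - {p}. Y c t)"
proof
  have t2: "tcomp TE t p = insert t (\<Union>c\<in>nb TE t - {p}. tcomp TE c t)" using T2[OF T e] .
  show "Y t p \<subseteq> (B t - B p) \<union> (\<Union>c\<in>nb TE t - {p}. Y c t)"
  proof
    fix v assume "v \<in> Y t p"
    then obtain s where s: "s \<in> tcomp TE t p" "v \<in> B s" "v \<notin> B p" by (auto simp: Y_def)
    show "v \<in> (B t - B p) \<union> (\<Union>c\<in>nb TE t - {p}. Y c t)"
    proof (cases "v \<in> B t")
      case True thus ?thesis using s by auto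
    next
      case False
      hence "s \<noteq> t" using s by auto
      then obtain c where "c \<in> nb TE t - {p}" "s \<in> tcomp TE c t" using s(1) t2 by auto
      thus ?thesis using s False by (auto simp: Y_def)
    qed
  qed
  show "(B t - B p) \<union> (\<Union>c\<in>nb TE t - {p}. Y c t) \<subseteq> Y t p"
  proof
    fix v assume "v \<in> (B t - B p) \<union> (\<Union>c\<in>nb TE t - {p}. Y c t)"
    thus "v \<in> Y t p"
    proof
      assume "v \<in> B t - B p" thus ?thesis using tcomp_self[of t TE p] by (auto simp: Y_def)
    next
      assume "v \<in> (\<Union>c\<in>nb TE t - {p}. Y c t)"
      then obtain c s where c: "c \<in> nb TE t" "c \<noteq> p" "s \<in> tcomp TE c t" "v \<in> B s" "v \<notin> B t"
        by (auto simp: Y_def)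
      have sp: "s \<in> tcomp TE t p" using t2 c by blast
      have tN: "t \<in> N" "p \<in> N" using edgeN[OF e] by auto
      have sN: "s \<in> N" using tcomp_sub_N[OF T tN(1)] sp by blast
      have vV: "v \<in> V" using Bsub[OF sN] c(4) by blast
      have "v \<notin> B p"
      proof
        assume "v \<in> B p"
        from CROSS[OF e vV sN c(4) sp tN(2) this tree_L'[OF T e]] c(5) show False by simp
      qed
      thus ?thesis using sp c(4) by (auto simp: Y_def)
    qed
  qed
qed

lemma Y_disj:
  assumes c: "c \<in> nb TE t" "c' \<in> nb TE t" "c \<noteq> c'"
  shows "Y c t \<inter> Y c' t = {}"
proof (rule ccontr)
  assume "Y c t \<inter> Y c' t \<noteq> {}"
  then obtain v where v: "v \<in> Y c t" "v \<in> Y c' t" by blast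
  obtain s' where s': "s' \<in> tcomp TE c' t" "v \<in> B s'" using v(2) by (auto simp: Y_def)
  have e': "{c',t} \<in> TE" using c(2) by (simp add: nb_def insert_commute)
  have s'N: "s' \<in> N" using tcomp_sub_N[OF T] edgeN[OF e'] s'(1) by blast
  have "s' \<in> tcomp TE c t" using BAGLOC[OF c(1) v(1) s'N s'(2)] .
  thus False using T2_disj[OF T c] s'(1) by blast
qed

lemma Y_Bt: "Y c t \<inter> B t = {}" by (auto simp: Y_def)

lemma good_Lf:
  assumes t: "t \<in> N" and v: "v \<in> B t" shows "good (Lf v)"
proof -
  have "mm V E {v} \<le> w" by (rule crossing[OF t, of "{}"]) (use v Bsub[OF t] in auto)
  thus ?thesis by (simp add: good_def)
qed

lemma BUILD:
  assumes t: "t \<in> N" and C: "C \<subseteq> nb TE t" and D: "D \<subseteq> B t"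
    and IH: "\<forall>c\<in>C. Y c t = {} \<or> (\<exists>T. good T \<and> lvs T = Y c t)"
  shows "D \<union> (\<Union>c\<in>C. Y c t) = {} \<or> (\<exists>T. good T \<and> lvs T = D \<union> (\<Union>c\<in>C. Y c t))"
proof -
  let ?C = "{c\<in>C. Y c t \<noteq> {}}"
  define Tc where "Tc c = (SOME T. good T \<and> lvs T = Y c t)" for c
  have Tc: "good (Tc c) \<and> lvs (Tc c) = Y c t" if "c \<in> ?C" for c
  proof -
    have "\<exists>T. good T \<and> lvs T = Y c t" using IH that by blast
    thus ?thesis unfolding Tc_def by (rule someI_ex)
  qed
  let ?I = "Tc ` ?C \<union> Lf ` D"
  have finC: "finite C" using finite_nb[OF ok finN] C finite_subset by blast
  have finD: "finite D" using finB[OF t] D finite_subset by blast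
  have finI: "finite ?I" using finC finD by auto
  have U: "\<Union> (lvs ` ?I) = D \<union> (\<Union>c\<in>C. Y c t)" using Tc by auto
  show ?thesis
  proof (cases "?I = {}")
    case True thus ?thesis using U by auto
  next
    case False
    obtain ts where ts: "set ts = ?I" "distinct ts" using finite_distinct_list[OF finI] by blast
    have "\<exists>T. wfb T \<and> (\<forall>s\<in>subts T. mm V E (lvs s) \<le> w) \<and> lvs T = \<Union> (lvs ` set ts)"
    proof (rule comb_lemma[OF ts(2)])
      show "ts \<noteq> []" using ts(1) False by auto
      show "\<forall>a\<in>set ts. \<forall>b\<in>set ts. a \<noteq> b \<longrightarrow> lvs a \<inter> lvs b = {}"
      proof (intro ballI impI)
        fix a b assume ab: "a \<in> set ts" "b \<in> set ts" "a \<noteq> b"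
        hence "a \<in> ?I" "b \<in> ?I" using ts by auto
        thus "lvs a \<inter> lvs b = {}"
        proof (elim UnE imageE)
          fix c c' assume "c \<in> ?C" "a = Tc c" "c' \<in> ?C" "b = Tc c'"
          thus ?thesis using ab(3) Tc Y_disj C by (metis (no_types, lifting) mem_Collect_eq subsetD)
        next
          fix c v assume h: "c \<in> ?C" "a = Tc c" "v \<in> D" "b = Lf v"
          have "v \<in> B t" using h(3) D by blast
          thus ?thesis using Tc[OF h(1)] Y_Bt[of c t] h by auto
        next
          fix c v assume h: "c \<in> ?C" "b = Tc c" "v \<in> D" "a = Lf v"
          have "v \<in> B t" using h(3) D by blast
          thus ?thesis using Tc[OF h(1)] Y_Bt[of c t] h by auto
        next
          fix v v' assume "v \<in> D" "a = Lf v" "v' \<in> D" "b = Lf v'"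
          thus ?thesis using ab(3) by auto
        qed
      qed
      show "\<forall>x\<in>set ts. wfb x \<and> (\<forall>s\<in>subts x. mm V E (lvs s) \<le> w)"
        using ts(1) Tc good_Lf[OF t] D unfolding good_def by auto
      show "\<forall>S. S \<subseteq> set ts \<longrightarrow> S \<noteq> {} \<longrightarrow> mm V E (\<Union> (lvs ` S)) \<le> w"
      proof (intro allI impI)
        fix S assume S: "S \<subseteq> set ts"
        show "mm V E (\<Union> (lvs ` S)) \<le> w"
        proof (rule crossing[OF t C])
          show "\<Union> (lvs ` S) \<subseteq> V"
          proof
            fix x assume "x \<in> \<Union> (lvs ` S)"
            then obtain s where s: "s \<in> S" "x \<in> lvs s" by auto
            hence "s \<in> ?I" using S ts(1) by auto
            thus "x \<in> V"
            proof
              assume "s \<in> Tc ` ?C"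
              then obtain c where c: "c \<in> ?C" "s = Tc c" by auto
              have "{t,c} \<in> TE" using c(1) C by (auto simp: nb_def)
              hence "{c,t} \<in> TE" by (simp add: insert_commute)
              thus ?thesis using Tc[OF c(1)] s c Y_sub by auto
            next
              assume "s \<in> Lf ` D" thus ?thesis using s D Bsub[OF t] by auto
            qed
          qed
          show "\<forall>u\<in>\<Union> (lvs ` S) - B t. \<exists>c\<in>C. u \<in> Y c t \<and> Y c t \<subseteq> \<Union> (lvs ` S)"
          proof
            fix u assume u: "u \<in> \<Union> (lvs ` S) - B t"
            then obtain s where s: "s \<in> S" "u \<in> lvs s" by auto
            hence "s \<in> ?I" using S ts(1) by auto
            thus "\<exists>c\<in>C. u \<in> Y c t \<and> Y c t \<subseteq> \<Union> (lvs ` S)"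
            proof
              assume "s \<in> Tc ` ?C"
              then obtain c where c: "c \<in> ?C" "s = Tc c" by auto
              thus ?thesis using Tc[OF c(1)] s by auto
            next
              assume "s \<in> Lf ` D"
              thus ?thesis using s u D by auto
            qed
          qed
        qed
      qed
    qed
    thus ?thesis using ts(1) U unfolding good_def by auto
  qed
qed

lemma REC:
  "{t,p} \<in> TE \<Longrightarrow> Y t p = {} \<or> (\<exists>T. good T \<and> lvs T = Y t p)"
proof (induction "card (tcomp TE t p)" arbitrary: t p rule: less_induct)
  case less
  let ?C = "nb TE t - {p}"
  have IH: "\<forall>c\<in>?C. Y c t = {} \<or> (\<exists>T. good T \<and> lvs T = Y c t)"
  proof
    fix c assume c: "c \<in> ?C"
    have ec: "{c,t} \<in> TE" using c by (simp add: nb_def insert_commute)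
    show "Y c t = {} \<or> (\<exists>T. good T \<and> lvs T = Y c t)"
      by (rule less.hyps[OF T2_card[OF T less.prems] ec]) (use c in auto)
  qed
  have "B t - B p \<subseteq> B t" by blast
  from BUILD[OF _ _ this IH] edgeN[OF less.prems] Y_decomp[OF less.prems] show ?case by auto
qed

lemma ROOT:
  assumes r: "r \<in> N" and Vne: "V \<noteq> {}"
  shows "\<exists>T. good T \<and> lvs T = V"
proof -
  have IH: "\<forall>c\<in>nb TE r. Y c r = {} \<or> (\<exists>T. good T \<and> lvs T = Y c r)"
    using REC by (simp add: nb_def insert_commute)
  have "V = B r \<union> (\<Union>c\<in>nb TE r. Y c r)"
  proof
    show "B r \<union> (\<Union>c\<in>nb TE r. Y c r) \<subseteq> V"
      using Bsub[OF r] Y_sub by (auto simp: nb_def insert_commute)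
    show "V \<subseteq> B r \<union> (\<Union>c\<in>nb TE r. Y c r)"
    proof
      fix v assume "v \<in> V"
      then obtain x where x: "x \<in> N" "v \<in> B x" using Vun by blast
      show "v \<in> B r \<union> (\<Union>c\<in>nb TE r. Y c r)"
      proof (cases "v \<in> B r")
        case False
        hence "x \<noteq> r" using x by auto
        then obtain c where "c \<in> nb TE r" "x \<in> tcomp TE c r" using root_decomp[OF T r] x(1) by auto
        thus ?thesis using x False by (auto simp: Y_def)
      qed simp
    qed
  qed
  with BUILD[OF r subset_refl subset_refl IH] Vne show ?thesis by auto
qed

end




lemma trivial_td:
  assumes G: "graph V E" shows "tree_decomp V E {0} {} (\<lambda>_. V)"
proof -
  have "is_tree {0} {}" by (simp add: is_tree_def tree_conn_def)
  moreover have "tree_conn {} S" if "S \<subseteq> {0::nat}" for S using that by (auto simp: tree_conn_def)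
  ultimately show ?thesis using graph_in[OF G] by (auto simp: tree_decomp_def)
qed

lemma good_tree:
  assumes G: "graph V E" and Vne: "V \<noteq> {}" and TD: "tree_decomp V E N TE B" and bag: "\<forall>x\<in>N. card (B x) \<le> w"
  shows "\<exists>T. wfb T \<and> lvs T = V \<and> (\<forall>s\<in>subts T. mm V E (lvs s) \<le> w)"
proof -
  interpret TDL V E N TE B w using G TD bag by unfold_locales
  obtain r where "r \<in> N" using TD by (auto simp: tree_decomp_def)
  from ROOT[OF this Vne] show ?thesis by (auto simp: good_def)
qed

lemma empty_bd: "branch_decomp {} {} {} f"
  by (simp add: branch_decomp_def is_tree_def tree_conn_def tleaves_def bij_betw_def)

lemma empty_bd_width: "bd_sm_width V E {} {} f = 0"
  by (simp add: bd_sm_width_def)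

lemma bt_width:
  assumes G: "graph V E" and w: "wfb T" and lv: "lvs T = V" and good: "\<forall>s\<in>subts T. mm V E (lvs s) \<le> k"
    and k: "1 \<le> k"
  shows "bd_sm_width V E (nodes 0 T) (eds 0 T) (lab 0 T) \<le> k"
  unfolding bd_sm_width_def
proof (rule Sup_nat_le)
  show "finite {sm V E (lab 0 T ` (tleaves (nodes 0 T) (eds 0 T) \<inter> tcomp (eds 0 T) a b)) | a b. {a, b} \<in> eds 0 T}"
    by (rule cuts_finite[OF finite_nodes eds_ok])
  show "\<forall>x\<in>{sm V E (lab 0 T ` (tleaves (nodes 0 T) (eds 0 T) \<inter> tcomp (eds 0 T) a b)) | a b. {a, b} \<in> eds 0 T}. x \<le> k"
  proof (clarify)
    fix a b assume e: "{a,b} \<in> eds 0 T"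
    obtain s where s: "s \<in> subts T" and X: "lab 0 T ` (tleaves (nodes 0 T) (eds 0 T) \<inter> tcomp (eds 0 T) a b) \<in> {lvs s, lvs T - lvs s}"
      using BD2[OF w e] by blast
    have sV: "lvs s \<subseteq> V" using subts_lvs[OF s] lv by simp
    have "mm V E (lvs s) \<le> k" using good s by blast
    moreover have "mm V E (V - lvs s) = mm V E (lvs s)" by (rule mm_compl[OF G sV])
    ultimately have "mm V E (lab 0 T ` (tleaves (nodes 0 T) (eds 0 T) \<inter> tcomp (eds 0 T) a b)) \<le> k"
      using X lv by auto
    thus "sm V E (lab 0 T ` (tleaves (nodes 0 T) (eds 0 T) \<inter> tcomp (eds 0 T) a b)) \<le> k"
      using sm_le[of V E] k by (meson le_trans max.bounded_iff)
  qed
qed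

lemma smw_le:
  assumes "branch_decomp V N TE f" "bd_sm_width V E N TE f \<le> k"
  shows "smw V E \<le> k"
proof -
  have "smw V E \<le> bd_sm_width V E N TE f" unfolding smw_def
    by (rule Least_le) (use assms(1) in blast)
  thus ?thesis using assms(2) by simp
qed

lemma exists_bd:
  assumes G: "graph V E" shows "\<exists>N TE f. branch_decomp V N TE f"
proof (cases "V = {}")
  case True thus ?thesis using empty_bd by blast
next
  case False
  have "\<forall>x\<in>{0::nat}. card ((\<lambda>_. V) x) \<le> card V" by simp
  from good_tree[OF G False trivial_td[OF G] this] obtain T where "wfb T" "lvs T = V" by blast
  thus ?thesis using BD1 by metis
qed

lemma part1:
  assumes G: "graph V E" shows "int (smw V E) \<le> treewidth V E + 1"
proof -
  let ?P = "\<lambda>k. \<exists>N TE B. tree_decomp V E N TE B \<and> Max (card ` B ` N) = k"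
  have "?P (card V)" using trivial_td[OF G] by fastforce
  hence "?P (Least ?P)" by (rule LeastI)
  then obtain N TE B where td: "tree_decomp V E N TE B" and mx: "Max (card ` B ` N) = Least ?P" by blast
  have tw: "treewidth V E + 1 = int (Least ?P)" by (simp add: treewidth_def)
  have finN: "finite N" and Nne: "N \<noteq> {}" using td by (auto simp: tree_decomp_def is_tree_def)
  have bag: "\<forall>x\<in>N. card (B x) \<le> Least ?P" using mx finN by (metis Max_ge finite_imageI image_eqI)
  show ?thesis
  proof (cases "V = {}")
    case True
    have bd: "branch_decomp V {} {} (\<lambda>_. SOME x. x \<in> V)" using empty_bd True by simp
    have "smw V E \<le> 0" using smw_le[OF bd, of E 0] by (simp add: empty_bd_width)
    thus ?thesis using tw by simp
  next
    case False
    then obtain v where v: "v \<in> V" by blast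
    then obtain x where x: "x \<in> N" "v \<in> B x" using td by (auto simp: tree_decomp_def)
    have "finite (B x)" using td x graph_fin[OF G] finite_subset by (auto simp: tree_decomp_def)
    hence "card (B x) \<ge> 1" using x(2) by (metis One_nat_def Suc_leI card_gt_0_iff empty_iff)
    hence k1: "1 \<le> Least ?P" using bag x(1) by fastforce
    obtain T where T: "wfb T" "lvs T = V" "\<forall>s\<in>subts T. mm V E (lvs s) \<le> Least ?P"
      using good_tree[OF G False td bag] by blast
    have "smw V E \<le> Least ?P"
      by (rule smw_le[OF _ bt_width[OF G T k1]]) (use BD1[OF T(1)] T(2) in simp)
    thus ?thesis using tw by simp
  qed
qed




fun relab :: "nat list \<Rightarrow> (nat \<Rightarrow> nat) \<Rightarrow> 'a cwexp \<Rightarrow> 'a cwexp" where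
  "relab [] g e = e"
| "relab (i # is) g e = CRelab i (g i) (relab is g e)"

fun joins :: "(nat \<times> nat) list \<Rightarrow> 'a cwexp \<Rightarrow> 'a cwexp" where
  "joins [] e = e"
| "joins ((i,j) # ps) e = CJoin i j (joins ps e)"

lemma relab_verts[simp]: "cw_verts (relab ls g e) = cw_verts e"
  by (induction ls) auto

lemma relab_edges[simp]: "cw_edges (relab ls g e) = cw_edges e"
  by (induction ls) auto

lemma relab_lab:
  "distinct ls \<Longrightarrow> (\<forall>i\<in>set ls. g i \<notin> set ls) \<Longrightarrow>
   cw_lab (relab ls g e) x = (if cw_lab e x \<in> set ls then g (cw_lab e x) else cw_lab e x)"
  by (induction ls) auto

lemma relab_ok:
  "cw_ok K e \<Longrightarrow> (\<forall>i\<in>set ls. i < K \<and> g i < K) \<Longrightarrow> cw_ok K (relab ls g e)"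
  by (induction ls) auto

lemma joins_verts[simp]: "cw_verts (joins ps e) = cw_verts e"
  by (induction ps e rule: joins.induct) auto

lemma joins_lab[simp]: "cw_lab (joins ps e) = cw_lab e"
  by (induction ps e rule: joins.induct) auto

lemma joins_edges:
  "cw_edges (joins ps e) x y = (cw_edges e x y \<or> (x \<in> cw_verts e \<and> y \<in> cw_verts e \<and>
     (\<exists>(i,j)\<in>set ps. (cw_lab e x = i \<and> cw_lab e y = j) \<or> (cw_lab e x = j \<and> cw_lab e y = i))))"
  by (induction ps e rule: joins.induct) auto

lemma joins_ok:
  "cw_ok K e \<Longrightarrow> (\<forall>(i,j)\<in>set ps. i < K \<and> j < K \<and> i \<noteq> j) \<Longrightarrow> cw_ok K (joins ps e)"
  by (induction ps e rule: joins.induct) auto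

definition nbo :: "'a set \<Rightarrow> ('a \<Rightarrow> 'a \<Rightarrow> bool) \<Rightarrow> 'a set \<Rightarrow> 'a \<Rightarrow> 'a set" where
  "nbo V E X x = {z \<in> V - X. E x z}"

definition INV :: "'a set \<Rightarrow> ('a \<Rightarrow> 'a \<Rightarrow> bool) \<Rightarrow> nat \<Rightarrow> 'a set \<Rightarrow> 'a cwexp \<Rightarrow> bool" where
  "INV V E D X e \<longleftrightarrow> cw_ok (3 * D) e \<and> cw_verts e = X \<and> cw_edges e = (\<lambda>x y. x \<in> X \<and> y \<in> X \<and> E x y)
     \<and> (\<forall>x\<in>X. cw_lab e x < D) \<and> (\<forall>x\<in>X. \<forall>y\<in>X. cw_lab e x = cw_lab e y \<longrightarrow> nbo V E X x = nbo V E X y)"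

lemma INV_leaf:
  assumes G: "graph V E" and D: "1 \<le> D" shows "INV V E D {v} (CVert v 0)"
  using D graph_irr[OF G] by (auto simp: INV_def fun_eq_iff)

lemma nbo_sub:
  assumes "X1 \<subseteq> X" "x \<in> X1" shows "nbo V E X x = nbo V E X1 x \<inter> (V - X)"
  using assms by (auto simp: nbo_def)

lemma COMBINE:
  assumes G: "graph V E" and disj: "X1 \<inter> X2 = {}" and sub: "X1 \<union> X2 \<subseteq> V"
    and i1: "INV V E D X1 e1" and i2: "INV V E D X2 e2"
    and cnt: "card (nbo V E (X1 \<union> X2) ` (X1 \<union> X2)) \<le> D" and D1: "1 \<le> D"
  shows "\<exists>e. INV V E D (X1 \<union> X2) e"
proof -
  let ?X = "X1 \<union> X2"
  have ok1: "cw_ok (3*D) e1" and v1: "cw_verts e1 = X1" and ed1: "cw_edges e1 = (\<lambda>x y. x \<in> X1 \<and> y \<in> X1 \<and> E x y)"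
    and l1: "\<forall>x\<in>X1. cw_lab e1 x < D" and q1: "\<forall>x\<in>X1. \<forall>y\<in>X1. cw_lab e1 x = cw_lab e1 y \<longrightarrow> nbo V E X1 x = nbo V E X1 y"
    using i1 unfolding INV_def by blast+
  have ok2: "cw_ok (3*D) e2" and v2: "cw_verts e2 = X2" and ed2: "cw_edges e2 = (\<lambda>x y. x \<in> X2 \<and> y \<in> X2 \<and> E x y)"
    and l2: "\<forall>x\<in>X2. cw_lab e2 x < D" and q2: "\<forall>x\<in>X2. \<forall>y\<in>X2. cw_lab e2 x = cw_lab e2 y \<longrightarrow> nbo V E X2 x = nbo V E X2 y"
    using i2 unfolding INV_def by blast+
  define e2' where "e2' = relab [0..<D] (\<lambda>i. i + D) e2"
  have ok2': "cw_ok (3*D) e2'" unfolding e2'_def by (rule relab_ok[OF ok2]) auto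
  have lab2': "x \<in> X2 \<Longrightarrow> cw_lab e2' x = cw_lab e2 x + D" for x
    unfolding e2'_def using l2 by (subst relab_lab) auto
  define u where "u = CUnion e1 e2'"
  define L where "L = cw_lab u"
  have okU: "cw_ok (3*D) u" using ok1 ok2' v1 v2 disj by (simp add: u_def e2'_def)
  have vU: "cw_verts u = ?X" using v1 v2 by (simp add: u_def e2'_def)
  have LX1: "x \<in> X1 \<Longrightarrow> L x = cw_lab e1 x" for x using v1 by (simp add: L_def u_def)
  have LX2: "x \<in> X2 \<Longrightarrow> L x = cw_lab e2 x + D" for x using v1 disj lab2' by (auto simp: L_def u_def)
  have edU: "cw_edges u x y = ((x \<in> X1 \<and> y \<in> X1 \<or> x \<in> X2 \<and> y \<in> X2) \<and> E x y)" for x y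
    using ed1 ed2 by (auto simp: u_def e2'_def)
  define P where "P i j = (\<exists>x\<in>X1. \<exists>y\<in>X2. cw_lab e1 x = i \<and> cw_lab e2 y = j \<and> E x y)" for i j
  define ps where "ps = filter (\<lambda>(i,j). P i (j - D)) (List.product [0..<D] [D..<2*D])"
  have ps_iff: "(i,j) \<in> set ps \<longleftrightarrow> i < D \<and> D \<le> j \<and> j < 2*D \<and> P i (j - D)" for i j
    by (auto simp: ps_def)
  define e3 where "e3 = joins ps u"
  have ok3: "cw_ok (3*D) e3" unfolding e3_def
    by (rule joins_ok[OF okU]) (auto simp: ps_def)
  have v3: "cw_verts e3 = ?X" using vU by (simp add: e3_def)
  have L3: "cw_lab e3 = L" by (simp add: e3_def L_def)
  have uni: "E x y" if x: "x \<in> X1" and y: "y \<in> X2" and P: "P (cw_lab e1 x) (cw_lab e2 y)" for x y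
  proof -
    obtain x0 y0 where xy0: "x0 \<in> X1" "y0 \<in> X2" "cw_lab e1 x0 = cw_lab e1 x" "cw_lab e2 y0 = cw_lab e2 y" "E x0 y0"
      using P unfolding P_def by blast
    have "nbo V E X1 x0 = nbo V E X1 x" using q1 xy0(1,3) x by blast
    moreover have "y0 \<in> nbo V E X1 x0" using xy0(2,5) sub disj by (auto simp: nbo_def)
    ultimately have "E x y0" by (simp add: nbo_def)
    hence "E y0 x" by (rule graph_sym[OF G])
    have "nbo V E X2 y0 = nbo V E X2 y" using q2 xy0(2,4) y by blast
    moreover have "x \<in> nbo V E X2 y0" using \<open>E y0 x\<close> x sub disj by (auto simp: nbo_def)
    ultimately have "E y x" by (simp add: nbo_def)
    thus ?thesis by (rule graph_sym[OF G])
  qed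
  have ed3: "cw_edges e3 = (\<lambda>x y. x \<in> ?X \<and> y \<in> ?X \<and> E x y)"
  proof (intro ext)
    fix x y
    have j: "cw_edges e3 x y = (cw_edges u x y \<or> (x \<in> ?X \<and> y \<in> ?X \<and>
       (\<exists>(i,j)\<in>set ps. (L x = i \<and> L y = j) \<or> (L x = j \<and> L y = i))))"
      unfolding e3_def joins_edges vU L_def by simp
    show "cw_edges e3 x y = (x \<in> ?X \<and> y \<in> ?X \<and> E x y)"
    proof
      assume "cw_edges e3 x y"
      then consider "cw_edges u x y" | i j where "x \<in> ?X" "y \<in> ?X" "(i,j) \<in> set ps" "L x = i" "L y = j"
        | i j where "x \<in> ?X" "y \<in> ?X" "(i,j) \<in> set ps" "L x = j" "L y = i"
        unfolding j by blast
      thus "x \<in> ?X \<and> y \<in> ?X \<and> E x y"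
      proof cases
        case 1 thus ?thesis using edU by auto
      next
        case 2
        have ij: "i < D" "D \<le> j" "j < 2*D" "P i (j - D)" using 2(3) ps_iff by auto
        have xX: "x \<in> X1" using 2(1,4) ij LX2 by fastforce
        have yX: "y \<in> X2" using 2(2,5) ij LX1 l1 by fastforce
        have "j - D = cw_lab e2 y" "i = cw_lab e1 x" using 2(4,5) LX1[OF xX] LX2[OF yX] by simp_all
        hence "P (cw_lab e1 x) (cw_lab e2 y)" using ij by simp
        thus ?thesis using uni[OF xX yX] xX yX by simp
      next
        case 3
        have ij: "i < D" "D \<le> j" "j < 2*D" "P i (j - D)" using 3(3) ps_iff by auto
        have xX: "y \<in> X1" using 3(2,5) ij LX2 by fastforce
        have yX: "x \<in> X2" using 3(1,4) ij LX1 l1 by fastforce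
        have "j - D = cw_lab e2 x" "i = cw_lab e1 y" using 3(4,5) LX1[OF xX] LX2[OF yX] by simp_all
        hence "P (cw_lab e1 y) (cw_lab e2 x)" using ij by simp
        hence "E y x" using uni[OF xX yX] by simp
        thus ?thesis using graph_sym[OF G] xX yX by blast
      qed
    next
      assume h: "x \<in> ?X \<and> y \<in> ?X \<and> E x y"
      show "cw_edges e3 x y"
      proof (cases "x \<in> X1 \<and> y \<in> X1 \<or> x \<in> X2 \<and> y \<in> X2")
        case True thus ?thesis using h edU j by auto
      next
        case False
        hence "x \<in> X1 \<and> y \<in> X2 \<or> x \<in> X2 \<and> y \<in> X1" using h by auto
        thus ?thesis
        proof
          assume xy: "x \<in> X1 \<and> y \<in> X2"
          have "(cw_lab e1 x, cw_lab e2 y + D) \<in> set ps"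
            using ps_iff l1 l2 xy h unfolding P_def by auto
          thus ?thesis using j h LX1 LX2 xy by fastforce
        next
          assume xy: "x \<in> X2 \<and> y \<in> X1"
          have "E y x" using h graph_sym[OF G] by blast
          hence "(cw_lab e1 y, cw_lab e2 x + D) \<in> set ps"
            using ps_iff l1 l2 xy h unfolding P_def by auto
          thus ?thesis using j h LX1 LX2 xy by fastforce
        qed
      qed
    qed
  qed
  let ?K = "nbo V E ?X ` ?X"
  have finK: "finite ?K" using graph_fin[OF G] sub finite_subset by blast
  obtain h where h: "bij_betw h ?K {0..<card ?K}" using ex_bij_betw_finite_nat[OF finK] by blast
  have hD: "k \<in> ?K \<Longrightarrow> h k < D" for k
  proof -
    assume "k \<in> ?K"
    hence "h k \<in> {0..<card ?K}" using h by (auto simp: bij_betw_def)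
    thus ?thesis using cnt by simp
  qed
  have hinj: "inj_on h ?K" using h by (simp add: bij_betw_def)
  define rep where "rep l = (SOME x. x \<in> ?X \<and> L x = l)" for l
  have rep: "x \<in> ?X \<Longrightarrow> rep (L x) \<in> ?X \<and> L (rep (L x)) = L x" for x
    unfolding rep_def by (rule someI) auto
  have Lsm: "x \<in> ?X \<Longrightarrow> L x < 2*D" for x using LX1 LX2 l1 l2 by fastforce
  have rep_nbo: "x \<in> ?X \<Longrightarrow> nbo V E ?X (rep (L x)) = nbo V E ?X x" for x
  proof -
    assume x: "x \<in> ?X"
    let ?y = "rep (L x)"
    have y: "?y \<in> ?X" "L ?y = L x" using rep[OF x] by auto
    show ?thesis
    proof (cases "x \<in> X1")
      case True
      have "?y \<in> X1"
      proof (rule ccontr)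
        assume "?y \<notin> X1"
        hence "?y \<in> X2" using y by auto
        thus False using y(2) LX2 LX1[OF True] l1 True by fastforce
      qed
      hence "nbo V E X1 ?y = nbo V E X1 x" using q1 True y(2) LX1 by metis
      thus ?thesis using nbo_sub[of X1 ?X] True \<open>?y \<in> X1\<close> by simp
    next
      case False
      hence xX2: "x \<in> X2" using x by auto
      have "?y \<in> X2"
      proof (rule ccontr)
        assume "?y \<notin> X2"
        hence "?y \<in> X1" using y by auto
        thus False using y(2) LX2[OF xX2] LX1 l1 by fastforce
      qed
      hence "nbo V E X2 ?y = nbo V E X2 x" using q2 xX2 y(2) LX2 by (metis add_right_cancel)
      thus ?thesis using nbo_sub[of X2 ?X] xX2 \<open>?y \<in> X2\<close> by simp
    qed
  qed
  define h' where "h' k = (if k \<in> ?K then h k else 0)" for k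
  have h'D: "h' k < D" for k using hD D1 by (simp add: h'_def)
  define g where "g l = 2*D + h' (nbo V E ?X (rep l))" for l
  define e4 where "e4 = relab [0..<2*D] g e3"
  define e5 where "e5 = relab [2*D..<3*D] (\<lambda>m. m - 2*D) e4"
  have gK: "x \<in> ?X \<Longrightarrow> g (L x) = 2*D + h (nbo V E ?X x)" for x using rep_nbo by (simp add: g_def h'_def)
  have lab4: "x \<in> ?X \<Longrightarrow> cw_lab e4 x = 2*D + h (nbo V E ?X x)" for x
    unfolding e4_def using Lsm gK L3 by (subst relab_lab) (auto simp: g_def)
  have lab5: "x \<in> ?X \<Longrightarrow> cw_lab e5 x = h (nbo V E ?X x)" for x
    unfolding e5_def using lab4 hD by (subst relab_lab) auto
  have ok4: "cw_ok (3*D) e4" unfolding e4_def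
    by (rule relab_ok[OF ok3]) (use h'D in \<open>auto simp: g_def\<close>)
  have ok5: "cw_ok (3*D) e5" unfolding e5_def
    by (rule relab_ok[OF ok4]) auto
  show ?thesis
  proof (intro exI)
    show "INV V E D ?X e5"
      unfolding INV_def
    proof (intro conjI ballI impI)
      show "cw_ok (3*D) e5" by (rule ok5)
      show "cw_verts e5 = ?X" using v3 by (simp add: e5_def e4_def)
      show "cw_edges e5 = (\<lambda>x y. x \<in> ?X \<and> y \<in> ?X \<and> E x y)" using ed3 by (simp add: e5_def e4_def)
      fix x assume x: "x \<in> ?X"
      show "cw_lab e5 x < D" using lab5[OF x] hD x by auto
      fix y assume y: "y \<in> ?X" and eq: "cw_lab e5 x = cw_lab e5 y"
      have "h (nbo V E ?X x) = h (nbo V E ?X y)" using eq lab5 x y by simp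
      thus "nbo V E ?X x = nbo V E ?X y" using hinj x y by (auto simp: inj_on_def)
    qed
  qed
qed




lemma classes_bound:
  assumes G: "graph V E" and X: "X \<subseteq> V" and smk: "sm V E X \<le> k"
  shows "card (nbo V E X ` X) \<le> 2^k + k + 2"
proof (cases "is_split V E X (V - X)")
  case True
  have eq: "nbo V E X x = nbo V E X y" if "x \<in> X" "y \<in> X" "nbo V E X x \<noteq> {}" "nbo V E X y \<noteq> {}" for x y
  proof -
    have "(\<exists>z\<in>V - X. E x z)" "(\<exists>z\<in>V - X. E y z)" using that(3,4) by (auto simp: nbo_def)
    hence "{z \<in> V - X. E x z} = {z \<in> V - X. E y z}" using True that(1,2) unfolding is_split_def by blast
    thus ?thesis by (simp add: nbo_def)
  qed
  have "card (nbo V E X ` X) \<le> 2"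
  proof (cases "\<exists>x0\<in>X. nbo V E X x0 \<noteq> {}")
    case True
    then obtain x0 where x0: "x0 \<in> X" "nbo V E X x0 \<noteq> {}" by blast
    have "nbo V E X ` X \<subseteq> {{}, nbo V E X x0}" using eq x0 by blast
    hence "card (nbo V E X ` X) \<le> card {{}, nbo V E X x0}" by (rule card_mono[rotated]) simp
    also have "\<dots> \<le> 2" by (simp add: card_insert_le_m1)
    finally show ?thesis .
  next
    case False
    hence "nbo V E X ` X \<subseteq> {{}}" by blast
    hence "card (nbo V E X ` X) \<le> card {{}::'a set}" by (rule card_mono[rotated]) simp
    thus ?thesis by simp
  qed
  thus ?thesis by simp
next
  case False
  hence mmk: "mm V E X \<le> k" using smk by (simp add: sm_def)
  have fin: "finite V" using graph_fin[OF G] .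
  obtain M where M: "M \<in> matchings V E X" "card M = mm V E X" using mm_exists[OF fin X] by blast
  have Msub: "M \<subseteq> cutp V E X" and i1: "inj_on fst M" and i2: "inj_on snd M" using M(1) by (auto simp: matchings_def)
  have finM: "finite M"
  proof -
    have "M \<subseteq> V \<times> V" using Msub X by (auto simp: cutp_def)
    thus ?thesis using fin finite_subset by blast
  qed
  let ?SA = "fst ` M" and ?SB = "snd ` M"
  have key: "nbo V E X x \<subseteq> ?SB" if x: "x \<in> X" "x \<notin> ?SA" for x
  proof
    fix z assume z: "z \<in> nbo V E X x"
    show "z \<in> ?SB"
    proof (rule ccontr)
      assume zn: "z \<notin> ?SB"
      let ?M = "insert (x,z) M"
      have "?M \<in> matchings V E X"
        using Msub i1 i2 x z zn unfolding matchings_def cutp_def nbo_def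
        by (auto simp: inj_on_insert image_iff)
      hence "card ?M \<le> mm V E X" by (rule mm_ge[OF fin X])
      moreover have "(x,z) \<notin> M" using x(2) by (auto simp: image_iff)
      ultimately show False using finM M(2) by simp
    qed
  qed
  have "nbo V E X ` X \<subseteq> nbo V E X ` ?SA \<union> Pow ?SB"
    using key by blast
  hence "card (nbo V E X ` X) \<le> card (nbo V E X ` ?SA \<union> Pow ?SB)"
    by (rule card_mono[rotated]) (use finM in simp)
  also have "\<dots> \<le> card (nbo V E X ` ?SA) + card (Pow ?SB)" by (rule card_Un_le)
  also have "card (nbo V E X ` ?SA) \<le> card M" using card_image_le[OF finM, of fst] card_image_le[of ?SA "nbo V E X"] finM
    by (meson finite_imageI le_trans)
  also have "card (Pow ?SB) = 2 ^ card ?SB" using finM by (simp add: card_Pow)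
  also have "(2::nat) ^ card ?SB \<le> 2 ^ k"
    using card_image_le[OF finM, of snd] M(2) mmk by (intro power_increasing) auto
  finally show ?thesis using M(2) mmk by linarith
qed

locale BDL =
  fixes V :: "'a set" and E and N and TE and f and k :: nat
  assumes G: "graph V E" and BD: "branch_decomp V N TE f"
    and cut: "\<And>a b. {a,b} \<in> TE \<Longrightarrow> sm V E (f ` (tleaves N TE \<inter> tcomp TE a b)) \<le> k"
begin

abbreviation "DD \<equiv> 2^k + k + 2"

definition XX :: "nat \<Rightarrow> nat \<Rightarrow> 'a set" where
  "XX a b = f ` (tleaves N TE \<inter> tcomp TE a b)"

lemma T: "is_tree N TE" using BD by (simp add: branch_decomp_def)
lemma ok: "edges_ok N TE" using is_tree_D[OF T] by simp
lemma finN: "finite N" using is_tree_D[OF T] by simp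
lemma bij: "bij_betw f (tleaves N TE) V" using BD by (simp add: branch_decomp_def)
lemma deg3: "x \<in> N \<Longrightarrow> tdegree TE x \<le> 3" using BD by (simp add: branch_decomp_def)
lemma lvsN: "tleaves N TE \<subseteq> N" by (auto simp: tleaves_def)
lemma D1: "1 \<le> DD" by simp

lemma XX_sub: "XX a b \<subseteq> V" using bij by (auto simp: XX_def bij_betw_def)

lemma edgeN: "{a,b} \<in> TE \<Longrightarrow> a \<in> N \<and> b \<in> N \<and> a \<noteq> b"
  using edges_ok_edge[OF ok] by blast

lemma REC2: "{a,b} \<in> TE \<Longrightarrow> \<exists>e. INV V E DD (XX a b) e"
proof (induction "card (tcomp TE a b)" arbitrary: a b rule: less_induct)
  case less
  have e: "{a,b} \<in> TE" by (rule less.prems)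
  have aN: "a \<in> N" using edgeN[OF e] by simp
  have bnb: "b \<in> nb TE a" using e by (simp add: nb_def)
  have cnb: "card (nb TE a) = tdegree TE a" using tdegree_nb[OF ok finN] by simp
  have finnb: "finite (nb TE a)" using finite_nb[OF ok finN] .
  let ?C = "nb TE a - {b}"
  have t2: "tcomp TE a b = insert a (\<Union>c\<in>?C. tcomp TE c a)" using T2[OF T e] .
  have IH: "\<exists>e. INV V E DD (XX c a) e" if c: "c \<in> ?C" for c
  proof -
    have ec: "{c,a} \<in> TE" using c by (simp add: nb_def insert_commute)
    show ?thesis by (rule less.hyps[OF T2_card[OF T e] ec]) (use c in auto)
  qed
  show ?case
  proof (cases "a \<in> tleaves N TE")
    case True
    hence "card (nb TE a) \<le> 1" using cnb by (simp add: tleaves_def)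
    hence "nb TE a = {b}" using bnb finnb by (metis card_le_Suc0_iff_eq One_nat_def singletonD subsetI subset_antisym singletonI)
    hence "tcomp TE a b = {a}" using t2 by simp
    hence "XX a b = {f a}" using True by (auto simp: XX_def)
    thus ?thesis using INV_leaf[OF G D1] by metis
  next
    case False
    hence "tdegree TE a \<ge> 2" using aN by (auto simp: tleaves_def)
    hence cC: "card ?C \<ge> 1" "card ?C \<le> 2" using cnb deg3[OF aN] bnb finnb by auto
    have XXu: "XX a b = (\<Union>c\<in>?C. XX c a)" using t2 False by (auto simp: XX_def)
    have finC: "finite ?C" using finnb by simp
    show ?thesis
    proof (cases "card ?C = 1")
      case True
      then obtain c where "?C = {c}" using card_1_singletonE by blast
      thus ?thesis using IH XXu by auto
    next
      case False
      hence "card ?C = 2" using cC by simp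
      then obtain c1 c2 where C: "?C = {c1,c2}" "c1 \<noteq> c2" by (meson card_2_iff)
      have c12: "c1 \<in> nb TE a" "c2 \<in> nb TE a" using C by auto
      obtain e1 where e1: "INV V E DD (XX c1 a) e1" using IH C(1) by blast
      obtain e2 where e2: "INV V E DD (XX c2 a) e2" using IH C(1) by blast
      have disj: "XX c1 a \<inter> XX c2 a = {}"
      proof -
        have "tcomp TE c1 a \<inter> tcomp TE c2 a = {}" using T2_disj[OF T c12 C(2)] .
        moreover have "inj_on f (tleaves N TE)" using bij by (simp add: bij_betw_def)
        ultimately show ?thesis unfolding XX_def by (auto simp: inj_on_def)
      qed
      have U: "XX a b = XX c1 a \<union> XX c2 a" using XXu C by auto
      have cnt: "card (nbo V E (XX c1 a \<union> XX c2 a) ` (XX c1 a \<union> XX c2 a)) \<le> DD"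
        using classes_bound[OF G XX_sub[of a b], of k] cut[OF e] U by (simp add: XX_def)
      have sub: "XX c1 a \<union> XX c2 a \<subseteq> V" using XX_sub by auto
      from COMBINE[OF G disj sub e1 e2 cnt D1] U show ?thesis by simp
    qed
  qed
qed

lemma cw_bound: "cliquewidth V E \<le> 3 * DD"
proof (cases "V = {}")
  case True thus ?thesis by (simp add: cliquewidth_def)
next
  case False
  have ex: "\<exists>e. cw_ok (3*DD) e \<and> cw_verts e = V \<and> cw_edges e = E"
  proof (cases "TE = {}")
    case True
    have lne: "tleaves N TE \<noteq> {}" using bij False by (auto simp: bij_betw_def)
    hence Nne: "N \<noteq> {}" using lvsN by blast
    hence "card N = 1" using is_tree_D(4)[OF T] True by simp
    then obtain r where Nr: "N = {r}" using card_1_singletonE by blast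
    hence "tleaves N TE = {r}" using lne lvsN by blast
    hence V: "V = {f r}" using bij by (auto simp: bij_betw_def)
    have "E = (\<lambda>x y. False)"
    proof (intro ext)
      fix x y show "E x y = False" using graph_in[OF G, of x y] graph_irr[OF G] V by auto
    qed
    hence "cw_ok (3*DD) (CVert (f r) 0) \<and> cw_verts (CVert (f r) 0) = V \<and> cw_edges (CVert (f r) 0) = E"
      using V by simp
    thus ?thesis by blast
  next
    case False
    then obtain ed where ed: "ed \<in> TE" by blast
    then obtain a b where e: "ed = {a,b}" using ok unfolding edges_ok_def by blast
    have e': "{a,b} \<in> TE" using ed e by simp
    have "tleaves N TE = tleaves N TE \<inter> tcomp TE a b \<union> tleaves N TE \<inter> tcomp TE b a"
      using T1(2)[OF T e'] lvsN by blast
    hence V: "V = XX a b \<union> XX b a" using bij by (auto simp: XX_def bij_betw_def)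
    have disj: "XX a b \<inter> XX b a = {}"
    proof -
      have "tcomp TE a b \<inter> tcomp TE b a = {}" using T1(1)[OF T e'] .
      moreover have "inj_on f (tleaves N TE)" using bij by (simp add: bij_betw_def)
      ultimately show ?thesis unfolding XX_def by (auto simp: inj_on_def)
    qed
    obtain e1 where e1: "INV V E DD (XX a b) e1" using REC2[OF e'] by blast
    have e'': "{b,a} \<in> TE" using e' by (simp add: insert_commute)
    obtain e2 where e2: "INV V E DD (XX b a) e2" using REC2[OF e''] by blast
    have "nbo V E V ` V \<subseteq> {{}}" by (auto simp: nbo_def)
    hence "card (nbo V E V ` V) \<le> card {{}::'a set}" by (rule card_mono[rotated]) simp
    hence "card (nbo V E V ` V) \<le> 1" by simp
    hence cnt: "card (nbo V E (XX a b \<union> XX b a) ` (XX a b \<union> XX b a)) \<le> DD" using V by simp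
    have sub: "XX a b \<union> XX b a \<subseteq> V" using V by simp
    obtain e where "INV V E DD (XX a b \<union> XX b a) e" using COMBINE[OF G disj sub e1 e2 cnt D1] by blast
    hence "INV V E DD V e" using V by simp
    moreover have "(\<lambda>x y. x \<in> V \<and> y \<in> V \<and> E x y) = E" using graph_in[OF G] by (auto simp: fun_eq_iff)
    ultimately show ?thesis unfolding INV_def by auto
  qed
  have "cliquewidth V E = (LEAST k. \<exists>e. cw_ok k e \<and> cw_verts e = V \<and> cw_edges e = E)"
    using False by (simp add: cliquewidth_def)
  also have "\<dots> \<le> 3 * DD" by (rule Least_le) (rule ex)
  finally show ?thesis .
qed

end

lemma part2:
  assumes G: "graph V E" and k: "smw V E \<le> k"
  shows "cliquewidth V E \<le> 3 * (2^k + k + 2)"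
proof -
  let ?P = "\<lambda>w. \<exists>N TE f. branch_decomp V N TE f \<and> bd_sm_width V E N TE f = w"
  obtain N0 TE0 f0 where "branch_decomp V N0 TE0 f0" using exists_bd[OF G] by blast
  hence "?P (bd_sm_width V E N0 TE0 f0)" by blast
  hence "?P (Least ?P)" by (rule LeastI)
  then obtain N TE f where bd: "branch_decomp V N TE f" and wd: "bd_sm_width V E N TE f = smw V E"
    unfolding smw_def by blast
  have T: "is_tree N TE" using bd by (simp add: branch_decomp_def)
  have cut: "sm V E (f ` (tleaves N TE \<inter> tcomp TE a b)) \<le> k" if e: "{a,b} \<in> TE" for a b
  proof -
    have "sm V E (f ` (tleaves N TE \<inter> tcomp TE a b)) \<le> bd_sm_width V E N TE f"
      unfolding bd_sm_width_def
      by (rule le_Sup_nat[OF cuts_finite[OF is_tree_D(1,2)[OF T]]]) (use e in blast)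
    thus ?thesis using wd k by simp
  qed
  interpret BDL V E N TE f k using G bd cut by unfold_locales
  show ?thesis by (rule cw_bound)
qed


theorem proposition1:
  shows "(\<forall>(V :: 'a set) E. graph V E \<longrightarrow> int (smw V E) \<le> treewidth V E + 1)
     \<and> (\<forall>\<C> :: ('b set \<times> ('b \<Rightarrow> 'b \<Rightarrow> bool)) set.
          (\<forall>(V, E) \<in> \<C>. graph V E) \<longrightarrow> (\<exists>k. \<forall>(V, E) \<in> \<C>. smw V E \<le> k)
          \<longrightarrow> (\<exists>c. \<forall>(V, E) \<in> \<C>. cliquewidth V E \<le> c))"
proof (intro conjI allI impI)
  fix V :: "'a set" and E assume "graph V E"
  thus "int (smw V E) \<le> treewidth V E + 1" by (rule part1)
next
  fix \<C> :: "('b set \<times> ('b \<Rightarrow> 'b \<Rightarrow> bool)) set"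
  assume G: "\<forall>(V, E) \<in> \<C>. graph V E" and K: "\<exists>k. \<forall>(V, E) \<in> \<C>. smw V E \<le> k"
  then obtain k where k: "\<forall>(V, E) \<in> \<C>. smw V E \<le> k" by blast
  show "\<exists>c. \<forall>(V, E) \<in> \<C>. cliquewidth V E \<le> c"
  proof (intro exI ballI)
    fix p assume p: "p \<in> \<C>"
    obtain V E where [simp]: "p = (V, E)" by (cases p)
    have "graph V E" "smw V E \<le> k" using G k p by auto
    from part2[OF this] show "(case p of (V, E) \<Rightarrow> cliquewidth V E \<le> 3 * (2^k + k + 2))" by simp
  qed
qed

end
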